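(* Let $R$ be a ring satisfying condition (C): every subring of $Q_{\max}^r(R)$ containing $R$ is flat as a left $R$-module. Then for every successor ordinal $\alpha$, the Gabriel filter $\mathcal{E}_\alpha$ (defined in the context) has a basis consisting of finitely generated right ideals, i.e. for every $I\in\mathcal{E}_\alpha$ there is a finitely generated right ideal $J\in\mathcal{E}_\alpha$ with $J\subseteq I$.
   Context: Rings are associative with unit; modules are right modules. For a Gabriel filter $\mathcal{E}$ of right ideals of $R$ (equivalently a hereditary torsion theory whose torsion modules $M$ are those with $\{r: mr=0\}\in\mathcal{E}$ for all $m\in M$), $R_{\mathcal{E}}=\varinjlim_{I\in\mathcal{E}}\mathrm{Hom}_R(I,R/\mathcal{T}R)$ is its right ring of quotients. The rings $Q_\alpha\subseteq Q_{\max}^r(R)$ and filters $\mathcal{E}_\alpha$ are defined by transfinite induction: $\mathcal{E}_0$ is the set of dense right ideals and $Q_0=Q_{\max}^r(R)$; $\mathcal{E}_{\alpha+1}=\{I \text{ right ideal of } R: IQ_\alpha=Q_\alpha\}$ (the Gabriel filter of the torsion theory whose torsion modules are the $M$ with $M\otimes_R Q_\alpha=0$) and $Q_{\alpha+1}=R_{\mathcal{E}_{\alpha+1}}$; for limit $\alpha$, $\mathcal{E}_\alpha=\bigcap_{\beta<\alpha}\mathcal{E}_\beta$ and $Q_\alpha=R_{\mathcal{E}_\alpha}$. *)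

theory Defs
  imports "HOL-Algebra.Subrings" "HOL-Algebra.AbelCoset"
begin

definition right_ideal :: "('a, 'm) ring_scheme \<Rightarrow> 'a set \<Rightarrow> bool" where
  "right_ideal R I \<longleftrightarrow> additive_subgroup I R \<and>
     (\<forall>x\<in>I. \<forall>r\<in>carrier R. x \<otimes>\<^bsub>R\<^esub> r \<in> I)"

definition right_ideal_gen :: "('a, 'm) ring_scheme \<Rightarrow> 'a set \<Rightarrow> 'a set" where
  "right_ideal_gen R F = \<Inter>{J. right_ideal R J \<and> F \<subseteq> J}"

definition fg_right_ideal :: "('a, 'm) ring_scheme \<Rightarrow> 'a set \<Rightarrow> bool" where
  "fg_right_ideal R I \<longleftrightarrow> right_ideal R I \<and>
     (\<exists>F. finite F \<and> F \<subseteq> carrier R \<and> I = right_ideal_gen R F)"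

definition dense_right_ideal :: "('a, 'm) ring_scheme \<Rightarrow> 'a set \<Rightarrow> bool" where
  "dense_right_ideal R D \<longleftrightarrow> right_ideal R D \<and>
     (\<forall>r1\<in>carrier R. \<forall>r2\<in>carrier R. r2 \<noteq> \<zero>\<^bsub>R\<^esub> \<longrightarrow>
        (\<exists>r\<in>carrier R. r1 \<otimes>\<^bsub>R\<^esub> r \<in> D \<and> r2 \<otimes>\<^bsub>R\<^esub> r \<noteq> \<zero>\<^bsub>R\<^esub>))"

section \<open>The maximal right ring of quotients as direct limit of Hom_R(D,R), D dense\<close>

definition rhom_on :: "('a, 'm) ring_scheme \<Rightarrow> 'a set \<Rightarrow> ('a \<Rightarrow> 'a) \<Rightarrow> bool" where
  "rhom_on R D f \<longleftrightarrow> (\<forall>x\<in>D. f x \<in> carrier R) \<and>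
     (\<forall>x\<in>D. \<forall>y\<in>D. f (x \<oplus>\<^bsub>R\<^esub> y) = f x \<oplus>\<^bsub>R\<^esub> f y) \<and>
     (\<forall>x\<in>D. \<forall>r\<in>carrier R. f (x \<otimes>\<^bsub>R\<^esub> r) = f x \<otimes>\<^bsub>R\<^esub> r)"

definition qrep :: "('a, 'm) ring_scheme \<Rightarrow> 'a set \<times> ('a \<Rightarrow> 'a) \<Rightarrow> bool" where
  "qrep R p \<longleftrightarrow> dense_right_ideal R (fst p) \<and> rhom_on R (fst p) (snd p)"

definition qequiv :: "('a, 'm) ring_scheme \<Rightarrow> 'a set \<times> ('a \<Rightarrow> 'a) \<Rightarrow> 'a set \<times> ('a \<Rightarrow> 'a) \<Rightarrow> bool" where
  "qequiv R p q \<longleftrightarrow> (\<exists>D. dense_right_ideal R D \<and> D \<subseteq> fst p \<inter> fst q \<and>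
      (\<forall>x\<in>D. snd p x = snd q x))"

definition qclass :: "('a, 'm) ring_scheme \<Rightarrow> 'a set \<times> ('a \<Rightarrow> 'a) \<Rightarrow> ('a set \<times> ('a \<Rightarrow> 'a)) set" where
  "qclass R p = {q. qrep R q \<and> qequiv R p q}"

definition Qmax_carrier :: "('a, 'm) ring_scheme \<Rightarrow> ('a set \<times> ('a \<Rightarrow> 'a)) set set" where
  "Qmax_carrier R = {qclass R p | p. qrep R p}"

definition qadd :: "('a, 'm) ring_scheme \<Rightarrow> ('a set \<times> ('a \<Rightarrow> 'a)) set \<Rightarrow> ('a set \<times> ('a \<Rightarrow> 'a)) set
    \<Rightarrow> ('a set \<times> ('a \<Rightarrow> 'a)) set" where
  "qadd R A B = (let p = (SOME p. p \<in> A); q = (SOME q. q \<in> B) in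
     qclass R (fst p \<inter> fst q, \<lambda>x. add R (snd p x) (snd q x)))"

definition qmul :: "('a, 'm) ring_scheme \<Rightarrow> ('a set \<times> ('a \<Rightarrow> 'a)) set \<Rightarrow> ('a set \<times> ('a \<Rightarrow> 'a)) set
    \<Rightarrow> ('a set \<times> ('a \<Rightarrow> 'a)) set" where
  "qmul R A B = (let p = (SOME p. p \<in> A); q = (SOME q. q \<in> B) in
     qclass R ({x \<in> fst q. snd q x \<in> fst p}, \<lambda>x. snd p (snd q x)))"

definition qemb :: "('a, 'm) ring_scheme \<Rightarrow> 'a \<Rightarrow> ('a set \<times> ('a \<Rightarrow> 'a)) set" where
  "qemb R r = qclass R (carrier R, \<lambda>x. r \<otimes>\<^bsub>R\<^esub> x)"

definition Qmax :: "('a, 'm) ring_scheme \<Rightarrow> ('a set \<times> ('a \<Rightarrow> 'a)) set ring" where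
  "Qmax R = \<lparr> carrier = Qmax_carrier R, mult = qmul R, one = qemb R \<one>\<^bsub>R\<^esub>,
             zero = qemb R \<zero>\<^bsub>R\<^esub>, add = qadd R \<rparr>"

definition qsum :: "('a, 'm) ring_scheme \<Rightarrow> ('a set \<times> ('a \<Rightarrow> 'a)) set list \<Rightarrow> ('a set \<times> ('a \<Rightarrow> 'a)) set" where
  "qsum R xs = foldr (qadd R) xs (qemb R \<zero>\<^bsub>R\<^esub>)"

text \<open>For a Gabriel filter E of right ideals with R E-torsionfree and E contained in the
  dense filter, R_E = lim_{I \<in> E} Hom_R(I,R) is identified with the elements of Q_max
  having a representative defined on an ideal of E.\<close>
definition ring_of_quotients :: "('a, 'm) ring_scheme \<Rightarrow> 'a set set \<Rightarrow> ('a set \<times> ('a \<Rightarrow> 'a)) set set" where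
  "ring_of_quotients R E = {A \<in> Qmax_carrier R. \<exists>p\<in>A. fst p \<in> E}"

definition ideal_ext :: "('a, 'm) ring_scheme \<Rightarrow> 'a set \<Rightarrow> ('a set \<times> ('a \<Rightarrow> 'a)) set set
    \<Rightarrow> ('a set \<times> ('a \<Rightarrow> 'a)) set set" where
  "ideal_ext R I Q = {qsum R (map (\<lambda>(i, q). qmul R (qemb R i) q) xs) | xs. set xs \<subseteq> I \<times> Q}"

definition is_succ :: "'o::wellorder \<Rightarrow> bool" where
  "is_succ \<alpha> \<longleftrightarrow> (\<exists>\<beta>. \<beta> < \<alpha> \<and> (\<forall>\<gamma>. \<not> (\<beta> < \<gamma> \<and> \<gamma> < \<alpha>)))"

definition filt_step :: "('a, 'm) ring_scheme \<Rightarrow> ('o::wellorder \<Rightarrow> 'a set set) \<Rightarrow> 'o \<Rightarrow> 'a set set" where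
  "filt_step R h \<alpha> =
    (if is_succ \<alpha> then
       (let \<beta> = (THE \<beta>. \<beta> < \<alpha> \<and> (\<forall>\<gamma>. \<not> (\<beta> < \<gamma> \<and> \<gamma> < \<alpha>)));
            Q = ring_of_quotients R (h \<beta>)
        in {I. right_ideal R I \<and> ideal_ext R I Q = Q})
     else if (\<exists>\<beta>. \<beta> < \<alpha>) then {I. right_ideal R I \<and> (\<forall>\<beta><\<alpha>. I \<in> h \<beta>)}
     else {D. dense_right_ideal R D})"

text \<open>E_alpha; Q_alpha = ring_of_quotients R (E_alpha) (for alpha = 0 this is all of Q_max)\<close>
definition filt_seq :: "('a, 'm) ring_scheme \<Rightarrow> 'o::wellorder \<Rightarrow> 'a set set" where
  "filt_seq R = wfrec {(x, y). x < y} (filt_step R)"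

text \<open>Formal Z-combinations of pairs (i, s) and the relation subgroup defining I \<otimes>_R S\<close>
definition fdelta :: "'b \<Rightarrow> 'b \<Rightarrow> int" where
  "fdelta p = (\<lambda>q. if q = p then 1 else 0)"

inductive_set tensor_rel ::
  "('a, 'm) ring_scheme \<Rightarrow> 'a set \<Rightarrow> ('a set \<times> ('a \<Rightarrow> 'a)) set set
     \<Rightarrow> ('a \<times> ('a set \<times> ('a \<Rightarrow> 'a)) set \<Rightarrow> int) set"
  for R I S where
  zero: "(\<lambda>_. 0) \<in> tensor_rel R I S"
| add_l: "\<lbrakk> i \<in> I; i' \<in> I; s \<in> S \<rbrakk> \<Longrightarrow>
     (\<lambda>p. fdelta (i \<oplus>\<^bsub>R\<^esub> i', s) p - fdelta (i, s) p - fdelta (i', s) p) \<in> tensor_rel R I S"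
| add_r: "\<lbrakk> i \<in> I; s \<in> S; s' \<in> S \<rbrakk> \<Longrightarrow>
     (\<lambda>p. fdelta (i, qadd R s s') p - fdelta (i, s) p - fdelta (i, s') p) \<in> tensor_rel R I S"
| balanced: "\<lbrakk> i \<in> I; r \<in> carrier R; s \<in> S \<rbrakk> \<Longrightarrow>
     (\<lambda>p. fdelta (i \<otimes>\<^bsub>R\<^esub> r, s) p - fdelta (i, qmul R (qemb R r) s) p) \<in> tensor_rel R I S"
| diff: "\<lbrakk> u \<in> tensor_rel R I S; v \<in> tensor_rel R I S \<rbrakk> \<Longrightarrow>
     (\<lambda>p. u p - v p) \<in> tensor_rel R I S"

text \<open>S is flat as a left R-module (flatness test): for every right ideal I the
  canonical map I \<otimes>_R S \<rightarrow> S is injective.\<close>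
definition left_flat_sub :: "('a, 'm) ring_scheme \<Rightarrow> ('a set \<times> ('a \<Rightarrow> 'a)) set set \<Rightarrow> bool" where
  "left_flat_sub R S \<longleftrightarrow> (\<forall>I xs. right_ideal R I \<longrightarrow> set xs \<subseteq> I \<times> S \<longrightarrow>
      qsum R (map (\<lambda>(i, s). qmul R (qemb R i) s) xs) = qemb R \<zero>\<^bsub>R\<^esub> \<longrightarrow>
      (\<lambda>p. \<Sum>x\<leftarrow>xs. fdelta x p) \<in> tensor_rel R I S)"

definition condition_C :: "('a, 'm) ring_scheme \<Rightarrow> bool" where
  "condition_C R \<longleftrightarrow> (\<forall>S. subring S (Qmax R) \<and> qemb R ` carrier R \<subseteq> S \<longrightarrow> left_flat_sub R S)"

end

theory Submission
  imports Defs
begin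

definition radd :: "('a, 'm) ring_scheme \<Rightarrow> 'a set \<times> ('a \<Rightarrow> 'a) \<Rightarrow> 'a set \<times> ('a \<Rightarrow> 'a) \<Rightarrow> 'a set \<times> ('a \<Rightarrow> 'a)" where
  "radd R p q = (fst p \<inter> fst q, \<lambda>x. add R (snd p x) (snd q x))"
definition rmul :: "('a, 'm) ring_scheme \<Rightarrow> 'a set \<times> ('a \<Rightarrow> 'a) \<Rightarrow> 'a set \<times> ('a \<Rightarrow> 'a) \<Rightarrow> 'a set \<times> ('a \<Rightarrow> 'a)" where
  "rmul R p q = ({x \<in> fst q. snd q x \<in> fst p}, \<lambda>x. snd p (snd q x))"
definition remb :: "('a, 'm) ring_scheme \<Rightarrow> 'a \<Rightarrow> 'a set \<times> ('a \<Rightarrow> 'a)" where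
  "remb R r = (carrier R, \<lambda>x. r \<otimes>\<^bsub>R\<^esub> x)"
definition rneg :: "('a, 'm) ring_scheme \<Rightarrow> 'a set \<times> ('a \<Rightarrow> 'a) \<Rightarrow> 'a set \<times> ('a \<Rightarrow> 'a)" where
  "rneg R p = (fst p, \<lambda>x. \<ominus>\<^bsub>R\<^esub> (snd p x))"

context ring
begin

lemma right_idealI:
  assumes "I \<subseteq> carrier R" "\<zero> \<in> I" "\<And>x y. x \<in> I \<Longrightarrow> y \<in> I \<Longrightarrow> x \<oplus> y \<in> I"
    "\<And>x. x \<in> I \<Longrightarrow> \<ominus> x \<in> I" "\<And>x r. x \<in> I \<Longrightarrow> r \<in> carrier R \<Longrightarrow> x \<otimes> r \<in> I"
  shows "right_ideal R I"
proof -
  have "subgroup I (add_monoid R)"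
    using assms by (auto intro!: subgroup.intro simp: a_inv_def[symmetric])
  then show ?thesis unfolding right_ideal_def using assms(5)
    by (auto intro: additive_subgroupI)
qed

lemma right_idealD:
  assumes "right_ideal R I"
  shows "I \<subseteq> carrier R" "\<zero> \<in> I" "\<And>x y. x \<in> I \<Longrightarrow> y \<in> I \<Longrightarrow> x \<oplus> y \<in> I"
    "\<And>x. x \<in> I \<Longrightarrow> \<ominus> x \<in> I" "\<And>x r. x \<in> I \<Longrightarrow> r \<in> carrier R \<Longrightarrow> x \<otimes> r \<in> I"
  using assms unfolding right_ideal_def
  by (auto intro: additive_subgroup.a_closed additive_subgroup.zero_closed
     additive_subgroup.a_inv_closed dest: additive_subgroup.a_subset)

lemma right_ideal_carrier: "right_ideal R (carrier R)"
  by (rule right_idealI) auto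

lemma dense_right_idealD:
  assumes "dense_right_ideal R D" "r1 \<in> carrier R" "r2 \<in> carrier R" "r2 \<noteq> \<zero>"
  obtains r where "r \<in> carrier R" "r1 \<otimes> r \<in> D" "r2 \<otimes> r \<noteq> \<zero>"
  using assms unfolding dense_right_ideal_def by blast

lemma dense_ri: "dense_right_ideal R D \<Longrightarrow> right_ideal R D"
  unfolding dense_right_ideal_def by blast

lemma dense_carrier: "dense_right_ideal R (carrier R)"
  unfolding dense_right_ideal_def
  by (auto intro: right_ideal_carrier intro!: bexI[where x="\<one>"])

lemma rhom_zero:
  assumes "right_ideal R D" "rhom_on R D f"
  shows "f \<zero> = \<zero>"
proof -
  have "\<zero> \<in> D" using right_idealD[OF assms(1)] by auto
  then have "f (\<zero> \<otimes> \<zero>) = f \<zero> \<otimes> \<zero>" using assms(2) unfolding rhom_on_def by (meson zero_closed)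
  moreover have "f \<zero> \<in> carrier R" using \<open>\<zero> \<in> D\<close> assms(2) unfolding rhom_on_def by auto
  ultimately show ?thesis by simp
qed

lemma rhom_neg:
  assumes "right_ideal R D" "rhom_on R D f" "x \<in> D"
  shows "f (\<ominus> x) = \<ominus> f x"
proof -
  have xc: "x \<in> carrier R" using right_idealD(1)[OF assms(1)] assms(3) by auto
  have fx: "f x \<in> carrier R" using assms unfolding rhom_on_def by auto
  have "f (x \<otimes> \<ominus> \<one>) = f x \<otimes> \<ominus> \<one>" using assms(2,3) unfolding rhom_on_def by auto
  then show ?thesis using xc fx by (simp add: r_minus)
qed

lemma rhom_on_mono: "rhom_on R D f \<Longrightarrow> D' \<subseteq> D \<Longrightarrow> right_ideal R D' \<Longrightarrow> rhom_on R D' f"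
  unfolding rhom_on_def using right_idealD(3,5) by (metis subsetD)

lemma right_ideal_Int:
  assumes "right_ideal R A" "right_ideal R B"
  shows "right_ideal R (A \<inter> B)"
  using right_idealD[OF assms(1)] right_idealD[OF assms(2)]
  by (intro right_idealI) auto

lemma dense_Int:
  assumes "dense_right_ideal R A" "dense_right_ideal R B"
  shows "dense_right_ideal R (A \<inter> B)"
proof -
  have ri: "right_ideal R (A \<inter> B)" using assms by (intro right_ideal_Int dense_ri)
  have "\<exists>r\<in>carrier R. r1 \<otimes> r \<in> A \<inter> B \<and> r2 \<otimes> r \<noteq> \<zero>"
    if r: "r1 \<in> carrier R" "r2 \<in> carrier R" "r2 \<noteq> \<zero>" for r1 r2
  proof -
    obtain s where s: "s \<in> carrier R" "r1 \<otimes> s \<in> A" "r2 \<otimes> s \<noteq> \<zero>"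
      using dense_right_idealD[OF assms(1) r] by blast
    obtain t where t: "t \<in> carrier R" "(r1 \<otimes> s) \<otimes> t \<in> B" "(r2 \<otimes> s) \<otimes> t \<noteq> \<zero>"
      using dense_right_idealD[OF assms(2), of "r1 \<otimes> s" "r2 \<otimes> s"] s r by auto
    have "(r1 \<otimes> s) \<otimes> t \<in> A" using right_idealD(5)[OF dense_ri[OF assms(1)]] s t by auto
    then show ?thesis using s t r by (intro bexI[where x="s \<otimes> t"]) (auto simp: m_assoc)
  qed
  then show ?thesis using ri unfolding dense_right_ideal_def by blast
qed

lemma preimage_right_ideal:
  assumes "right_ideal R D" "right_ideal R D'" "rhom_on R D' g"
  shows "right_ideal R {x \<in> D'. g x \<in> D}"
proof -
  note A = right_idealD[OF assms(1)] and B = right_idealD[OF assms(2)]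
  note G = assms(3)[unfolded rhom_on_def]
  show ?thesis
  proof (rule right_idealI)
    show "{x \<in> D'. g x \<in> D} \<subseteq> carrier R" using B by auto
    show "\<zero> \<in> {x \<in> D'. g x \<in> D}" using B A rhom_zero[OF assms(2,3)] by auto
    show "x \<oplus> y \<in> {x \<in> D'. g x \<in> D}" if "x \<in> {x \<in> D'. g x \<in> D}" "y \<in> {x \<in> D'. g x \<in> D}" for x y
      using that A B G by auto
    show "\<ominus> x \<in> {x \<in> D'. g x \<in> D}" if "x \<in> {x \<in> D'. g x \<in> D}" for x
      using that A B rhom_neg[OF assms(2,3)] by auto
    show "x \<otimes> r \<in> {x \<in> D'. g x \<in> D}" if "x \<in> {x \<in> D'. g x \<in> D}" "r \<in> carrier R" for x r
      using that A B G by auto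
  qed
qed

lemma preimage_dense:
  assumes "dense_right_ideal R D" "dense_right_ideal R D'" "rhom_on R D' g"
  shows "dense_right_ideal R {x \<in> D'. g x \<in> D}"
proof -
  have ri: "right_ideal R {x \<in> D'. g x \<in> D}"
    using assms by (intro preimage_right_ideal dense_ri)
  note B = right_idealD[OF dense_ri[OF assms(2)]]
  note G = assms(3)[unfolded rhom_on_def]
  have "\<exists>r\<in>carrier R. r1 \<otimes> r \<in> {x \<in> D'. g x \<in> D} \<and> r2 \<otimes> r \<noteq> \<zero>"
    if r: "r1 \<in> carrier R" "r2 \<in> carrier R" "r2 \<noteq> \<zero>" for r1 r2
  proof -
    obtain s where s: "s \<in> carrier R" "r1 \<otimes> s \<in> D'" "r2 \<otimes> s \<noteq> \<zero>"
      using dense_right_idealD[OF assms(2) r] by blast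
    have gs: "g (r1 \<otimes> s) \<in> carrier R" using G s by auto
    obtain t where t: "t \<in> carrier R" "g (r1 \<otimes> s) \<otimes> t \<in> D" "(r2 \<otimes> s) \<otimes> t \<noteq> \<zero>"
      using dense_right_idealD[OF assms(1), of "g (r1 \<otimes> s)" "r2 \<otimes> s"] s r gs by auto
    have "(r1 \<otimes> s) \<otimes> t \<in> D'" using B s t by auto
    moreover have "g ((r1 \<otimes> s) \<otimes> t) = g (r1 \<otimes> s) \<otimes> t" using G s t by auto
    ultimately show ?thesis using s t r by (intro bexI[where x="s \<otimes> t"]) (auto simp: m_assoc)
  qed
  then show ?thesis using ri unfolding dense_right_ideal_def by blast
qed

end

context ring
begin

lemma qrepD:
  assumes "qrep R p"
  shows "dense_right_ideal R (fst p)" "right_ideal R (fst p)" "fst p \<subseteq> carrier R"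
    "\<And>x. x \<in> fst p \<Longrightarrow> snd p x \<in> carrier R"
    "\<And>x y. x \<in> fst p \<Longrightarrow> y \<in> fst p \<Longrightarrow> snd p (x \<oplus> y) = snd p x \<oplus> snd p y"
    "\<And>x r. x \<in> fst p \<Longrightarrow> r \<in> carrier R \<Longrightarrow> snd p (x \<otimes> r) = snd p x \<otimes> r"
  using assms dense_ri right_idealD(1) unfolding qrep_def rhom_on_def by blast+

lemma qequiv_refl: "qrep R p \<Longrightarrow> qequiv R p p"
  unfolding qequiv_def qrep_def by auto

lemma qequiv_sym: "qequiv R p q \<Longrightarrow> qequiv R q p"
  unfolding qequiv_def by auto

lemma qequiv_trans: "qequiv R p q \<Longrightarrow> qequiv R q s \<Longrightarrow> qequiv R p s"
  unfolding qequiv_def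
proof (elim exE conjE)
  fix D1 D2 assume a: "dense_right_ideal R D1" "D1 \<subseteq> fst p \<inter> fst q" "\<forall>x\<in>D1. snd p x = snd q x"
    "dense_right_ideal R D2" "D2 \<subseteq> fst q \<inter> fst s" "\<forall>x\<in>D2. snd q x = snd s x"
  show "\<exists>D. dense_right_ideal R D \<and> D \<subseteq> fst p \<inter> fst s \<and> (\<forall>x\<in>D. snd p x = snd s x)"
    using a by (intro exI[where x="D1 \<inter> D2"]) (auto intro: dense_Int)
qed

lemma qequivI:
  "dense_right_ideal R D \<Longrightarrow> D \<subseteq> fst p \<Longrightarrow> D \<subseteq> fst q \<Longrightarrow> (\<And>x. x \<in> D \<Longrightarrow> snd p x = snd q x)
   \<Longrightarrow> qequiv R p q"
  unfolding qequiv_def by blast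

lemma qclass_eq: "qequiv R p q \<Longrightarrow> qclass R p = qclass R q"
  unfolding qclass_def using qequiv_sym qequiv_trans by blast

lemma qclass_eqI:
  "dense_right_ideal R D \<Longrightarrow> D \<subseteq> fst p \<Longrightarrow> D \<subseteq> fst q \<Longrightarrow> (\<And>x. x \<in> D \<Longrightarrow> snd p x = snd q x)
   \<Longrightarrow> qclass R p = qclass R q"
  by (rule qclass_eq, rule qequivI)

lemma qclass_cong:
  "qrep R p \<Longrightarrow> fst q = fst p \<Longrightarrow> (\<And>x. x \<in> fst p \<Longrightarrow> snd p x = snd q x)
   \<Longrightarrow> qclass R p = qclass R q"
  by (rule qclass_eqI[where D="fst p"]) (auto dest: qrepD)

lemma in_qclass: "qrep R p \<Longrightarrow> p \<in> qclass R p"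
  unfolding qclass_def using qequiv_refl by blast

lemma qclass_memD: "q \<in> qclass R p \<Longrightarrow> qrep R q \<and> qequiv R p q"
  unfolding qclass_def by blast

lemma qclass_in: "qrep R p \<Longrightarrow> qclass R p \<in> Qmax_carrier R"
  unfolding Qmax_carrier_def by blast

lemma Qmax_elemE:
  assumes "A \<in> Qmax_carrier R"
  obtains p where "qrep R p" "A = qclass R p"
  using assms unfolding Qmax_carrier_def by blast

lemma qclass_some:
  assumes "qrep R p"
  shows "(SOME q. q \<in> qclass R p) \<in> qclass R p"
  using in_qclass[OF assms] by (rule someI)

lemma qrep_remb: "r \<in> carrier R \<Longrightarrow> qrep R (remb R r)"
  unfolding qrep_def remb_def rhom_on_def
  by (auto simp: dense_carrier r_distr m_assoc)

lemma qrep_radd: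
  assumes "qrep R p" "qrep R q"
  shows "qrep R (radd R p q)"
proof -
  note P = qrepD[OF assms(1)] and Q = qrepD[OF assms(2)]
  have "dense_right_ideal R (fst p \<inter> fst q)" using P Q by (intro dense_Int)
  moreover have "rhom_on R (fst p \<inter> fst q) (\<lambda>x. snd p x \<oplus> snd q x)"
    unfolding rhom_on_def
  proof (intro conjI ballI)
    fix x y assume "x \<in> fst p \<inter> fst q" "y \<in> fst p \<inter> fst q"
    then show "snd p (x \<oplus> y) \<oplus> snd q (x \<oplus> y) = snd p x \<oplus> snd q x \<oplus> (snd p y \<oplus> snd q y)"
      using P Q by (simp add: a_ac)
  next
    fix x r assume "x \<in> fst p \<inter> fst q" "r \<in> carrier R"
    then show "snd p (x \<otimes> r) \<oplus> snd q (x \<otimes> r) = (snd p x \<oplus> snd q x) \<otimes> r"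
      using P Q by (simp add: l_distr)
  qed (use P Q in auto)
  ultimately show ?thesis unfolding qrep_def radd_def by simp
qed

lemma qrep_rneg:
  assumes "qrep R p"
  shows "qrep R (rneg R p)"
proof -
  note P = qrepD[OF assms(1)]
  have "rhom_on R (fst p) (\<lambda>x. \<ominus> snd p x)"
    unfolding rhom_on_def
    using P by (auto simp: minus_add l_minus)
  then show ?thesis using P unfolding qrep_def rneg_def by simp
qed

lemma qrep_rmul:
  assumes "qrep R p" "qrep R q"
  shows "qrep R (rmul R p q)"
proof -
  note P = qrepD[OF assms(1)] and Q = qrepD[OF assms(2)]
  have "dense_right_ideal R {x \<in> fst q. snd q x \<in> fst p}"
    using P Q assms(2) unfolding qrep_def by (intro preimage_dense) auto
  moreover have "rhom_on R {x \<in> fst q. snd q x \<in> fst p} (\<lambda>x. snd p (snd q x))"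
    unfolding rhom_on_def using P Q by auto
  ultimately show ?thesis unfolding qrep_def rmul_def by simp
qed

lemma qadd_class:
  assumes "qrep R p" "qrep R q"
  shows "qadd R (qclass R p) (qclass R q) = qclass R (radd R p q)"
proof -
  define p0 where "p0 = (SOME x. x \<in> qclass R p)"
  define q0 where "q0 = (SOME x. x \<in> qclass R q)"
  have p0: "qrep R p0" "qequiv R p0 p"
    using qclass_memD[OF qclass_some[OF assms(1)]] qequiv_sym unfolding p0_def by auto
  have q0: "qrep R q0" "qequiv R q0 q"
    using qclass_memD[OF qclass_some[OF assms(2)]] qequiv_sym unfolding q0_def by auto
  obtain D1 where D1: "dense_right_ideal R D1" "D1 \<subseteq> fst p0 \<inter> fst p" "\<forall>x\<in>D1. snd p0 x = snd p x"
    using p0 unfolding qequiv_def by blast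
  obtain D2 where D2: "dense_right_ideal R D2" "D2 \<subseteq> fst q0 \<inter> fst q" "\<forall>x\<in>D2. snd q0 x = snd q x"
    using q0 unfolding qequiv_def by blast
  have "qadd R (qclass R p) (qclass R q) = qclass R (radd R p0 q0)"
    unfolding qadd_def p0_def q0_def radd_def Let_def by simp
  also have "\<dots> = qclass R (radd R p q)"
    using D1 D2 by (intro qclass_eqI[where D="D1 \<inter> D2"]) (auto intro: dense_Int simp: radd_def)
  finally show ?thesis .
qed

lemma qmul_class:
  assumes "qrep R p" "qrep R q"
  shows "qmul R (qclass R p) (qclass R q) = qclass R (rmul R p q)"
proof -
  define p0 where "p0 = (SOME x. x \<in> qclass R p)"
  define q0 where "q0 = (SOME x. x \<in> qclass R q)"
  have p0: "qrep R p0" "qequiv R p0 p"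
    using qclass_memD[OF qclass_some[OF assms(1)]] qequiv_sym unfolding p0_def by auto
  have q0: "qrep R q0" "qequiv R q0 q"
    using qclass_memD[OF qclass_some[OF assms(2)]] qequiv_sym unfolding q0_def by auto
  obtain D1 where D1: "dense_right_ideal R D1" "D1 \<subseteq> fst p0 \<inter> fst p" "\<forall>x\<in>D1. snd p0 x = snd p x"
    using p0 unfolding qequiv_def by blast
  obtain D2 where D2: "dense_right_ideal R D2" "D2 \<subseteq> fst q0 \<inter> fst q" "\<forall>x\<in>D2. snd q0 x = snd q x"
    using q0 unfolding qequiv_def by blast
  have rh: "rhom_on R D2 (snd q)"
    using assms(2) D2 unfolding qrep_def by (auto intro: rhom_on_mono dense_ri)
  have dn: "dense_right_ideal R {x \<in> D2. snd q x \<in> D1}"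
    using D1 D2 rh by (intro preimage_dense) auto
  have "qmul R (qclass R p) (qclass R q) = qclass R (rmul R p0 q0)"
    unfolding qmul_def p0_def q0_def rmul_def Let_def by simp
  also have "\<dots> = qclass R (rmul R p q)"
    using D1 D2 dn by (intro qclass_eqI[where D="{x \<in> D2. snd q x \<in> D1}"]) (auto simp: rmul_def)
  finally show ?thesis .
qed

end

context ring
begin

lemma Qmax_simps[simp]: "carrier (Qmax R) = Qmax_carrier R" "add (Qmax R) = qadd R"
  "mult (Qmax R) = qmul R" "zero (Qmax R) = qemb R \<zero>" "one (Qmax R) = qemb R \<one>"
  unfolding Qmax_def by simp_all

lemma qemb_class: "qemb R r = qclass R (remb R r)"
  unfolding qemb_def remb_def by simp

lemma qemb_in: "r \<in> carrier R \<Longrightarrow> qemb R r \<in> Qmax_carrier R"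
  unfolding qemb_class by (intro qclass_in qrep_remb)

lemma QA_closed: "A \<in> Qmax_carrier R \<Longrightarrow> B \<in> Qmax_carrier R \<Longrightarrow> qadd R A B \<in> Qmax_carrier R"
  by (auto elim!: Qmax_elemE simp: qadd_class intro!: qclass_in qrep_radd)

lemma QM_closed: "A \<in> Qmax_carrier R \<Longrightarrow> B \<in> Qmax_carrier R \<Longrightarrow> qmul R A B \<in> Qmax_carrier R"
  by (auto elim!: Qmax_elemE simp: qmul_class intro!: qclass_in qrep_rmul)

lemma QA_assoc:
  assumes "A \<in> Qmax_carrier R" "B \<in> Qmax_carrier R" "C \<in> Qmax_carrier R"
  shows "qadd R (qadd R A B) C = qadd R A (qadd R B C)"
proof -
  obtain p q s where pqs: "qrep R p" "qrep R q" "qrep R s" "A = qclass R p" "B = qclass R q" "C = qclass R s"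
    using assms by (meson Qmax_elemE)
  note P = qrepD[OF pqs(1)] and Q = qrepD[OF pqs(2)] and S = qrepD[OF pqs(3)]
  have "qclass R (radd R (radd R p q) s) = qclass R (radd R p (radd R q s))"
    by (rule qclass_cong[OF qrep_radd[OF qrep_radd[OF pqs(1,2)] pqs(3)]])
       (use P Q S in \<open>auto simp: radd_def a_assoc\<close>)
  then show ?thesis using pqs by (simp add: qadd_class qrep_radd)
qed

lemma QA_comm:
  assumes "A \<in> Qmax_carrier R" "B \<in> Qmax_carrier R"
  shows "qadd R A B = qadd R B A"
proof -
  obtain p q where pqs: "qrep R p" "qrep R q" "A = qclass R p" "B = qclass R q"
    using assms by (meson Qmax_elemE)
  note P = qrepD[OF pqs(1)] and Q = qrepD[OF pqs(2)]
  have "qclass R (radd R p q) = qclass R (radd R q p)"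
    by (rule qclass_cong[OF qrep_radd[OF pqs(1,2)]])
       (use P Q in \<open>auto simp: radd_def a_comm\<close>)
  then show ?thesis using pqs by (simp add: qadd_class)
qed

lemma QA_zero:
  assumes "A \<in> Qmax_carrier R"
  shows "qadd R (qemb R \<zero>) A = A"
proof -
  obtain p where pqs: "qrep R p" "A = qclass R p"
    using assms by (meson Qmax_elemE)
  note P = qrepD[OF pqs(1)]
  have e: "qclass R p = qclass R (radd R (remb R \<zero>) p)"
    by (rule qclass_cong[OF pqs(1)]) (use P in \<open>auto simp: radd_def remb_def\<close>)
  show ?thesis
    unfolding pqs(2) qemb_class qadd_class[OF qrep_remb[OF zero_closed] pqs(1)] e[symmetric] ..
qed

lemma QA_neg:
  assumes "A \<in> Qmax_carrier R"
  shows "\<exists>B\<in>Qmax_carrier R. qadd R B A = qemb R \<zero>"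
proof -
  obtain p where pqs: "qrep R p" "A = qclass R p"
    using assms by (meson Qmax_elemE)
  note P = qrepD[OF pqs(1)]
  have "qclass R (radd R (rneg R p) p) = qclass R (remb R \<zero>)"
    by (rule qclass_eqI[where D="fst p"]) (use P in \<open>auto simp: radd_def remb_def rneg_def l_neg\<close>)
  then have "qadd R (qclass R (rneg R p)) A = qemb R \<zero>"
    using pqs by (simp add: qadd_class qrep_rneg qemb_class)
  then show ?thesis using qclass_in[OF qrep_rneg[OF pqs(1)]] by blast
qed

lemma QM_assoc:
  assumes "A \<in> Qmax_carrier R" "B \<in> Qmax_carrier R" "C \<in> Qmax_carrier R"
  shows "qmul R (qmul R A B) C = qmul R A (qmul R B C)"
proof -
  obtain p q s where pqs: "qrep R p" "qrep R q" "qrep R s" "A = qclass R p" "B = qclass R q" "C = qclass R s"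
    using assms by (meson Qmax_elemE)
  have "rmul R (rmul R p q) s = rmul R p (rmul R q s)"
    unfolding rmul_def by auto
  then show ?thesis using pqs by (simp add: qmul_class qrep_rmul)
qed

lemma QM_lone:
  assumes "A \<in> Qmax_carrier R"
  shows "qmul R (qemb R \<one>) A = A"
proof -
  obtain p where pqs: "qrep R p" "A = qclass R p"
    using assms by (meson Qmax_elemE)
  note P = qrepD[OF pqs(1)]
  have e: "qclass R p = qclass R (rmul R (remb R \<one>) p)"
    by (rule qclass_cong[OF pqs(1)]) (use P in \<open>auto simp: rmul_def remb_def\<close>)
  show ?thesis
    unfolding pqs(2) qemb_class qmul_class[OF qrep_remb[OF one_closed] pqs(1)] e[symmetric] ..
qed

lemma QM_rone:
  assumes "A \<in> Qmax_carrier R"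
  shows "qmul R A (qemb R \<one>) = A"
proof -
  obtain p where pqs: "qrep R p" "A = qclass R p"
    using assms by (meson Qmax_elemE)
  note P = qrepD[OF pqs(1)]
  have e: "qclass R p = qclass R (rmul R p (remb R \<one>))"
    by (rule qclass_cong[OF pqs(1)]) (use P in \<open>auto simp: rmul_def remb_def\<close>)
  show ?thesis
    unfolding pqs(2) qemb_class qmul_class[OF pqs(1) qrep_remb[OF one_closed]] e[symmetric] ..
qed

lemma QM_ldistr:
  assumes "A \<in> Qmax_carrier R" "B \<in> Qmax_carrier R" "C \<in> Qmax_carrier R"
  shows "qmul R (qadd R A B) C = qadd R (qmul R A C) (qmul R B C)"
proof -
  obtain p q s where pqs: "qrep R p" "qrep R q" "qrep R s" "A = qclass R p" "B = qclass R q" "C = qclass R s"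
    using assms by (meson Qmax_elemE)
  have "rmul R (radd R p q) s = radd R (rmul R p s) (rmul R q s)"
    unfolding rmul_def radd_def by auto
  then show ?thesis using pqs by (simp add: qadd_class qmul_class qrep_radd qrep_rmul)
qed

lemma QM_rdistr:
  assumes "A \<in> Qmax_carrier R" "B \<in> Qmax_carrier R" "C \<in> Qmax_carrier R"
  shows "qmul R C (qadd R A B) = qadd R (qmul R C A) (qmul R C B)"
proof -
  obtain p q s where pqs: "qrep R p" "qrep R q" "qrep R s" "A = qclass R p" "B = qclass R q" "C = qclass R s"
    using assms by (meson Qmax_elemE)
  note P = qrepD[OF pqs(1)] and Q = qrepD[OF pqs(2)] and S = qrepD[OF pqs(3)]
  have d: "dense_right_ideal R (fst (radd R (rmul R s p) (rmul R s q)))"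
    using qrepD(1)[OF qrep_radd[OF qrep_rmul qrep_rmul]] pqs by blast
  have "qclass R (rmul R s (radd R p q)) = qclass R (radd R (rmul R s p) (rmul R s q))"
  proof (rule qclass_eqI[OF d])
    show "fst (radd R (rmul R s p) (rmul R s q)) \<subseteq> fst (rmul R s (radd R p q))"
      using right_idealD(3)[OF S(2)] unfolding radd_def rmul_def by auto
    show "fst (radd R (rmul R s p) (rmul R s q)) \<subseteq> fst (radd R (rmul R s p) (rmul R s q))" by simp
    fix x assume "x \<in> fst (radd R (rmul R s p) (rmul R s q))"
    then have x: "x \<in> fst p" "x \<in> fst q" "snd p x \<in> fst s" "snd q x \<in> fst s"
      unfolding radd_def rmul_def by auto
    show "snd (rmul R s (radd R p q)) x = snd (radd R (rmul R s p) (rmul R s q)) x"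
      unfolding radd_def rmul_def using S(5)[OF x(3,4)] by simp
  qed
  then show ?thesis unfolding pqs(4-6) qadd_class[OF pqs(1,2)] qmul_class[OF pqs(3) qrep_radd[OF pqs(1,2)]]
    qmul_class[OF pqs(3,1)] qmul_class[OF pqs(3,2)] qadd_class[OF qrep_rmul[OF pqs(3,1)] qrep_rmul[OF pqs(3,2)]] .
qed

lemma Qmax_ring: "ring (Qmax R)"
proof (rule ringI)
  show "abelian_group (Qmax R)"
    apply (rule abelian_groupI)
    unfolding Qmax_simps
         apply (erule (1) QA_closed)
        apply (rule qemb_in, rule zero_closed)
       apply (erule (2) QA_assoc)
      apply (erule (1) QA_comm)
     apply (erule QA_zero)
    apply (erule QA_neg)
    done
  show "monoid (Qmax R)"
    apply (rule monoidI)
    unfolding Qmax_simps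
        apply (erule (1) QM_closed)
       apply (rule qemb_in, rule one_closed)
      apply (erule (2) QM_assoc)
     apply (erule QM_lone)
    apply (erule QM_rone)
    done
qed (unfold Qmax_simps, erule (2) QM_ldistr, erule (2) QM_rdistr)

end

definition qterm :: "('a, 'm) ring_scheme \<Rightarrow> 'a \<times> ('a set \<times> ('a \<Rightarrow> 'a)) set \<Rightarrow> ('a set \<times> ('a \<Rightarrow> 'a)) set" where
  "qterm R = (\<lambda>(i, q). qmul R (qemb R i) q)"

lemma ideal_ext_alt: "ideal_ext R I Q = {qsum R (map (qterm R) xs) | xs. set xs \<subseteq> I \<times> Q}"
  unfolding ideal_ext_def qterm_def by simp

lemma ideal_extI: "set xs \<subseteq> I \<times> Q \<Longrightarrow> qsum R (map (qterm R) xs) \<in> ideal_ext R I Q"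
  unfolding ideal_ext_alt by blast

lemma ideal_extE:
  assumes "y \<in> ideal_ext R I Q"
  obtains xs where "set xs \<subseteq> I \<times> Q" "y = qsum R (map (qterm R) xs)"
  using assms unfolding ideal_ext_alt by blast

context ring
begin

lemma qemb_add: "a \<in> carrier R \<Longrightarrow> b \<in> carrier R \<Longrightarrow> qemb R (a \<oplus> b) = qadd R (qemb R a) (qemb R b)"
  unfolding qemb_class qadd_class[OF qrep_remb qrep_remb]
  by (rule qclass_cong[OF qrep_remb]) (auto simp: remb_def radd_def l_distr)

lemma qemb_mul: "a \<in> carrier R \<Longrightarrow> b \<in> carrier R \<Longrightarrow> qemb R (a \<otimes> b) = qmul R (qemb R a) (qemb R b)"
  unfolding qemb_class qmul_class[OF qrep_remb qrep_remb]
  by (rule qclass_cong[OF qrep_remb]) (auto simp: remb_def rmul_def m_assoc)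

lemma qemb_neg: "a \<in> carrier R \<Longrightarrow> qemb R (\<ominus> a) = a_inv (Qmax R) (qemb R a)"
proof -
  interpret Q: ring "Qmax R" by (rule Qmax_ring)
  assume a: "a \<in> carrier R"
  have "qadd R (qemb R (\<ominus> a)) (qemb R a) = qemb R \<zero>"
    using a by (simp add: qemb_add[symmetric] l_neg)
  then show ?thesis using Q.minus_equality[of "qemb R (\<ominus> a)" "qemb R a"] a qemb_in by simp
qed

lemma qneg_class:
  assumes "qrep R p"
  shows "a_inv (Qmax R) (qclass R p) = qclass R (rneg R p)"
proof -
  interpret Q: ring "Qmax R" by (rule Qmax_ring)
  note P = qrepD[OF assms]
  have "qclass R (radd R (rneg R p) p) = qclass R (remb R \<zero>)"
    by (rule qclass_eqI[where D="fst p"]) (use P in \<open>auto simp: radd_def remb_def rneg_def l_neg\<close>)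
  then have "qadd R (qclass R (rneg R p)) (qclass R p) = qemb R \<zero>"
    using assms by (simp add: qadd_class qrep_rneg qemb_class)
  then show ?thesis
    using Q.minus_equality[of "qclass R (rneg R p)" "qclass R p"] qclass_in assms qrep_rneg by simp
qed

lemma Qmax_memE:
  assumes "A \<in> Qmax_carrier R" "p \<in> A"
  shows "qrep R p" "A = qclass R p"
proof -
  obtain p0 where p0: "qrep R p0" "A = qclass R p0" using assms(1) by (rule Qmax_elemE)
  show "qrep R p" "A = qclass R p" using qclass_memD[of p p0] assms(2) p0 qclass_eq by auto
qed

lemma qterm_closed: "i \<in> carrier R \<Longrightarrow> q \<in> Qmax_carrier R \<Longrightarrow> qterm R (i, q) \<in> Qmax_carrier R"
  unfolding qterm_def by (simp add: QM_closed qemb_in)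

lemma qsum_Nil[simp]: "qsum R [] = qemb R \<zero>"
  unfolding qsum_def by simp

lemma qsum_Cons[simp]: "qsum R (x # xs) = qadd R x (qsum R xs)"
  unfolding qsum_def by simp

lemma qsum_closed: "set xs \<subseteq> Qmax_carrier R \<Longrightarrow> qsum R xs \<in> Qmax_carrier R"
  by (induction xs) (auto simp: qemb_in QA_closed)

lemma qsum_append:
  "set xs \<subseteq> Qmax_carrier R \<Longrightarrow> set ys \<subseteq> Qmax_carrier R \<Longrightarrow>
   qsum R (xs @ ys) = qadd R (qsum R xs) (qsum R ys)"
  by (induction xs) (auto simp: QA_zero qsum_closed QA_assoc)

lemma qsum_neg:
  "set xs \<subseteq> Qmax_carrier R \<Longrightarrow> qsum R (map (a_inv (Qmax R)) xs) = a_inv (Qmax R) (qsum R xs)"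
proof (induction xs)
  case Nil
  interpret Q: ring "Qmax R" by (rule Qmax_ring)
  show ?case using Q.minus_zero by simp
next
  case (Cons x xs)
  interpret Q: ring "Qmax R" by (rule Qmax_ring)
  show ?case using Cons Q.minus_add[of x "qsum R xs"] qsum_closed by simp
qed

lemma qsum_mul:
  "set xs \<subseteq> Qmax_carrier R \<Longrightarrow> s \<in> Qmax_carrier R \<Longrightarrow>
   qmul R (qsum R xs) s = qsum R (map (\<lambda>y. qmul R y s) xs)"
proof (induction xs)
  case Nil
  interpret Q: ring "Qmax R" by (rule Qmax_ring)
  show ?case using Q.l_null[of s] Nil by simp
next
  case (Cons x xs)
  show ?case using Cons QM_ldistr qsum_closed by simp
qed

lemma qsum_in_sub: "subring S (Qmax R) \<Longrightarrow> set xs \<subseteq> S \<Longrightarrow> qsum R xs \<in> S"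
  by (induction xs) (use subringE[of S "Qmax R"] in auto)

definition qsubR :: "('a set \<times> ('a \<Rightarrow> 'a)) set set \<Rightarrow> bool" where
  "qsubR S \<longleftrightarrow> subring S (Qmax R) \<and> qemb R ` carrier R \<subseteq> S"

lemma qsubR_D:
  assumes "qsubR S"
  shows "S \<subseteq> Qmax_carrier R" "\<And>r. r \<in> carrier R \<Longrightarrow> qemb R r \<in> S"
    "\<And>a b. a \<in> S \<Longrightarrow> b \<in> S \<Longrightarrow> qadd R a b \<in> S"
    "\<And>a b. a \<in> S \<Longrightarrow> b \<in> S \<Longrightarrow> qmul R a b \<in> S"
    "\<And>a. a \<in> S \<Longrightarrow> a_inv (Qmax R) a \<in> S"
    "subring S (Qmax R)"
  using assms subringE[of S "Qmax R"] unfolding qsubR_def by auto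

lemma IE_sub:
  assumes "qsubR S" "I \<subseteq> carrier R"
  shows "ideal_ext R I S \<subseteq> S"
proof
  fix y assume "y \<in> ideal_ext R I S"
  then obtain xs where xs: "set xs \<subseteq> I \<times> S" "y = qsum R (map (qterm R) xs)" by (rule ideal_extE)
  have "set (map (qterm R) xs) \<subseteq> S"
  proof
    fix y assume "y \<in> set (map (qterm R) xs)"
    then obtain i q where iq: "(i, q) \<in> set xs" "y = qterm R (i, q)" by auto
    then have "i \<in> carrier R" "q \<in> S" using xs(1) assms(2) by auto
    then show "y \<in> S" using iq(2) qsubR_D(2,4)[OF assms(1)] by (simp add: qterm_def)
  qed
  then show "y \<in> S" using xs(2) qsum_in_sub qsubR_D(6)[OF assms(1)] by simp
qed

lemma IE_zero: "qemb R \<zero> \<in> ideal_ext R I S"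
  using ideal_extI[of "[]" I S R] by simp

lemma IE_single:
  assumes "qsubR S" "i \<in> I" "I \<subseteq> carrier R" "q \<in> S"
  shows "qmul R (qemb R i) q \<in> ideal_ext R I S"
proof -
  interpret Q: ring "Qmax R" by (rule Qmax_ring)
  have "qterm R (i, q) \<in> Qmax_carrier R"
    using assms qsubR_D(1)[OF assms(1)] by (intro qterm_closed) auto
  then have "qsum R (map (qterm R) [(i, q)]) = qmul R (qemb R i) q"
    using Q.r_zero by (simp add: qterm_def)
  then show ?thesis using ideal_extI[of "[(i, q)]" I S R] assms by simp
qed

lemma qterm_map_closed:
  assumes "qsubR S" "I \<subseteq> carrier R" "set zs \<subseteq> I \<times> S"
  shows "set (map (qterm R) zs) \<subseteq> Qmax_carrier R"
proof
  fix y assume "y \<in> set (map (qterm R) zs)"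
  then obtain i q where iq: "(i, q) \<in> set zs" "y = qterm R (i, q)" by auto
  then have "i \<in> carrier R" "q \<in> Qmax_carrier R" using assms qsubR_D(1)[OF assms(1)] by auto
  then show "y \<in> Qmax_carrier R" using iq(2) qterm_closed by simp
qed

lemma IE_add:
  assumes "qsubR S" "I \<subseteq> carrier R" "a \<in> ideal_ext R I S" "b \<in> ideal_ext R I S"
  shows "qadd R a b \<in> ideal_ext R I S"
proof -
  obtain xs where xs: "set xs \<subseteq> I \<times> S" "a = qsum R (map (qterm R) xs)" using assms(3) by (rule ideal_extE)
  obtain ys where ys: "set ys \<subseteq> I \<times> S" "b = qsum R (map (qterm R) ys)" using assms(4) by (rule ideal_extE)
  have c: "set (map (qterm R) zs) \<subseteq> Qmax_carrier R" if "set zs \<subseteq> I \<times> S" for zs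
    using qterm_map_closed[OF assms(1,2) that] .
  have "qadd R a b = qsum R (map (qterm R) (xs @ ys))"
    using xs ys c qsum_append by simp
  then show ?thesis using ideal_extI[of "xs @ ys" I S R] xs ys by simp
qed

lemma IE_neg:
  assumes "qsubR S" "I \<subseteq> carrier R" "a \<in> ideal_ext R I S"
  shows "a_inv (Qmax R) a \<in> ideal_ext R I S"
proof -
  interpret Q: ring "Qmax R" by (rule Qmax_ring)
  obtain xs where xs: "set xs \<subseteq> I \<times> S" "a = qsum R (map (qterm R) xs)" using assms(3) by (rule ideal_extE)
  define ys where "ys = map (\<lambda>(i, q). (i, a_inv (Qmax R) q)) xs"
  have ys: "set ys \<subseteq> I \<times> S" using xs(1) qsubR_D(5)[OF assms(1)] unfolding ys_def by auto
  have "map (qterm R) ys = map (a_inv (Qmax R)) (map (qterm R) xs)"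
    unfolding ys_def map_map
  proof (rule map_cong[OF refl])
    fix z assume "z \<in> set xs"
    obtain i q where z0: "z = (i, q)" by (cases z)
    with \<open>z \<in> set xs\<close> have z: "z = (i, q)" "i \<in> carrier R" "q \<in> Qmax_carrier R"
      using xs(1) assms(2) qsubR_D(1)[OF assms(1)] by auto
    show "(qterm R \<circ> (\<lambda>(i, q). (i, a_inv (Qmax R) q))) z = (a_inv (Qmax R) \<circ> qterm R) z"
      using Q.r_minus[of "qemb R i" q] z qemb_in[OF z(2)] by (simp add: qterm_def)
  qed
  moreover have "set (map (qterm R) xs) \<subseteq> Qmax_carrier R"
    using qterm_map_closed[OF assms(1,2) xs(1)] .
  ultimately have "a_inv (Qmax R) a = qsum R (map (qterm R) ys)"
    using xs(2) qsum_neg[of "map (qterm R) xs"] by (simp only:)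
  then show ?thesis using ideal_extI[OF ys] by simp
qed

lemma IE_rmul:
  assumes "qsubR S" "I \<subseteq> carrier R" "a \<in> ideal_ext R I S" "s \<in> S"
  shows "qmul R a s \<in> ideal_ext R I S"
proof -
  obtain xs where xs: "set xs \<subseteq> I \<times> S" "a = qsum R (map (qterm R) xs)" using assms(3) by (rule ideal_extE)
  define ys where "ys = map (\<lambda>(i, q). (i, qmul R q s)) xs"
  have ys: "set ys \<subseteq> I \<times> S" using xs(1) qsubR_D(4)[OF assms(1)] assms(4) unfolding ys_def by auto
  have sc: "s \<in> Qmax_carrier R" using assms(4) qsubR_D(1)[OF assms(1)] by auto
  have "map (qterm R) ys = map (\<lambda>y. qmul R y s) (map (qterm R) xs)"
    unfolding ys_def map_map
  proof (rule map_cong[OF refl])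
    fix z assume "z \<in> set xs"
    obtain i q where z0: "z = (i, q)" by (cases z)
    with \<open>z \<in> set xs\<close> have z: "z = (i, q)" "i \<in> carrier R" "q \<in> Qmax_carrier R"
      using xs(1) assms(2) qsubR_D(1)[OF assms(1)] by auto
    show "(qterm R \<circ> (\<lambda>(i, q). (i, qmul R q s))) z = ((\<lambda>y. qmul R y s) \<circ> qterm R) z"
      using QM_assoc[of "qemb R i" q s] z qemb_in[OF z(2)] sc by (simp add: qterm_def)
  qed
  moreover have "set (map (qterm R) xs) \<subseteq> Qmax_carrier R"
    using qterm_map_closed[OF assms(1,2) xs(1)] .
  ultimately have "qmul R a s = qsum R (map (qterm R) ys)"
    using xs(2) qsum_mul sc by simp
  then show ?thesis using ideal_extI[OF ys] by simp
qed

lemma IE_mono: "I \<subseteq> J \<Longrightarrow> ideal_ext R I S \<subseteq> ideal_ext R J S"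
  unfolding ideal_ext_alt by blast

lemma IE_one_imp:
  assumes "qsubR S" "I \<subseteq> carrier R" "qemb R \<one> \<in> ideal_ext R I S"
  shows "ideal_ext R I S = S"
proof
  show "ideal_ext R I S \<subseteq> S" using IE_sub assms by blast
  show "S \<subseteq> ideal_ext R I S"
  proof
    fix x assume x: "x \<in> S"
    have "qmul R (qemb R \<one>) x = x" using QM_lone x qsubR_D(1)[OF assms(1)] by auto
    then show "x \<in> ideal_ext R I S" using IE_rmul[OF assms x] by simp
  qed
qed

end

context ring
begin

definition good :: "'a set set \<Rightarrow> bool" where
  "good E \<longleftrightarrow> (\<forall>I\<in>E. right_ideal R I) \<and> carrier R \<in> E \<and>
     (\<forall>D\<in>E. \<forall>p. qrep R p \<and> fst p \<in> E \<longrightarrow> {x \<in> fst p. snd p x \<in> D} \<in> E)"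

lemma goodD:
  assumes "good E"
  shows "\<And>I. I \<in> E \<Longrightarrow> right_ideal R I" "carrier R \<in> E"
    "\<And>D p. D \<in> E \<Longrightarrow> qrep R p \<Longrightarrow> fst p \<in> E \<Longrightarrow> {x \<in> fst p. snd p x \<in> D} \<in> E"
  using assms unfolding good_def by blast+

lemma qrep_id: "dense_right_ideal R D \<Longrightarrow> qrep R (D, \<lambda>x. x)"
  unfolding qrep_def rhom_on_def using right_idealD(1)[OF dense_ri] by auto

lemma roqI: "qrep R p \<Longrightarrow> fst p \<in> E \<Longrightarrow> qclass R p \<in> ring_of_quotients R E"
  unfolding ring_of_quotients_def using qclass_in in_qclass by blast

lemma roqE:
  assumes "A \<in> ring_of_quotients R E"
  obtains p where "qrep R p" "fst p \<in> E" "A = qclass R p"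
  using assms Qmax_memE unfolding ring_of_quotients_def by blast

lemma good_qsubR:
  assumes "good E"
  shows "qsubR (ring_of_quotients R E)"
proof -
  interpret Q: ring "Qmax R" by (rule Qmax_ring)
  note G = goodD[OF assms]
  have emb: "qemb R r \<in> ring_of_quotients R E" if "r \<in> carrier R" for r
    unfolding qemb_class using that G(2) by (intro roqI qrep_remb) (auto simp: remb_def)
  have "subring (ring_of_quotients R E) (Qmax R)"
  proof (rule Q.subringI)
    show "ring_of_quotients R E \<subseteq> carrier (Qmax R)" unfolding ring_of_quotients_def by auto
    show "\<one>\<^bsub>Qmax R\<^esub> \<in> ring_of_quotients R E" using emb by simp
  next
    fix h assume "h \<in> ring_of_quotients R E"
    then obtain p where p: "qrep R p" "fst p \<in> E" "h = qclass R p" by (rule roqE)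
    show "\<ominus>\<^bsub>Qmax R\<^esub> h \<in> ring_of_quotients R E"
      unfolding p(3) qneg_class[OF p(1)] using p by (intro roqI qrep_rneg) (auto simp: rneg_def)
  next
    fix h1 h2 assume "h1 \<in> ring_of_quotients R E" "h2 \<in> ring_of_quotients R E"
    then obtain p q where p: "qrep R p" "fst p \<in> E" "h1 = qclass R p"
      and q: "qrep R q" "fst q \<in> E" "h2 = qclass R q" by (meson roqE)
    have "{x \<in> fst q. snd q x \<in> fst p} \<in> E" using G(3)[OF p(2) q(1,2)] .
    then show "h1 \<otimes>\<^bsub>Qmax R\<^esub> h2 \<in> ring_of_quotients R E"
      unfolding p(3) q(3) Qmax_simps qmul_class[OF p(1) q(1)]
      by (intro roqI qrep_rmul p q) (simp add: rmul_def)
    have "{x \<in> fst (fst q, \<lambda>x. x). snd (fst q, \<lambda>x. x) x \<in> fst p} \<in> E"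
      using G(3)[OF p(2) qrep_id[OF qrepD(1)[OF q(1)]]] q(2) by simp
    then have "fst p \<inter> fst q \<in> E" by (simp add: Int_def conj_commute)
    then show "h1 \<oplus>\<^bsub>Qmax R\<^esub> h2 \<in> ring_of_quotients R E"
      unfolding p(3) q(3) Qmax_simps qadd_class[OF p(1) q(1)]
      by (intro roqI qrep_radd p q) (simp add: radd_def)
  qed
  then show ?thesis unfolding qsubR_def using emb by auto
qed

end

definition lin :: "('g, 'n) ring_scheme \<Rightarrow> ('p \<Rightarrow> 'g) \<Rightarrow> 'p set \<Rightarrow> ('p \<Rightarrow> int) \<Rightarrow> 'g" where
  "lin G \<phi> T v = finsum G (\<lambda>p. add_pow G (v p) (\<phi> p)) T"

context abelian_group
begin

lemma add_pow_int_0: "add_pow G (0::int) x = \<zero>"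
  by (simp add: add_pow_def)

lemma lin_closed: "\<phi> \<in> UNIV \<rightarrow> carrier G \<Longrightarrow> lin G \<phi> T v \<in> carrier G"
  unfolding lin_def by (intro finsum_closed) (auto simp: add.int_pow_closed)

lemma lin_add:
  assumes "\<phi> \<in> UNIV \<rightarrow> carrier G"
  shows "lin G \<phi> T (\<lambda>p. v p + w p) = lin G \<phi> T v \<oplus> lin G \<phi> T w"
proof -
  have "lin G \<phi> T (\<lambda>p. v p + w p) = finsum G (\<lambda>p. add_pow G (v p) (\<phi> p) \<oplus> add_pow G (w p) (\<phi> p)) T"
    unfolding lin_def using assms by (intro finsum_cong') (auto simp: add.int_pow_mult[OF funcset_mem[OF assms UNIV_I]])
  also have "\<dots> = lin G \<phi> T v \<oplus> lin G \<phi> T w"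
    unfolding lin_def using assms by (intro finsum_addf) auto
  finally show ?thesis .
qed

lemma lin_zero: "lin G \<phi> T (\<lambda>p. 0) = \<zero>"
  unfolding lin_def add_pow_int_0 by simp

lemma lin_neg:
  assumes "\<phi> \<in> UNIV \<rightarrow> carrier G"
  shows "lin G \<phi> T (\<lambda>p. - v p) = \<ominus> lin G \<phi> T v"
proof -
  have "lin G \<phi> T (\<lambda>p. - v p) \<oplus> lin G \<phi> T v = \<zero>"
    using lin_add[OF assms, of T "\<lambda>p. - v p" v, symmetric] lin_zero by simp
  then show ?thesis using minus_equality lin_closed[OF assms] by metis
qed

lemma lin_diff:
  assumes "\<phi> \<in> UNIV \<rightarrow> carrier G"
  shows "lin G \<phi> T (\<lambda>p. v p - w p) = lin G \<phi> T v \<ominus> lin G \<phi> T w"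
  using lin_add[OF assms, of T v "\<lambda>p. - w p"] lin_neg[OF assms, of T w]
  by (simp add: a_minus_def)

lemma lin_delta:
  assumes "\<phi> \<in> UNIV \<rightarrow> carrier G" "finite T" "a \<in> T"
  shows "lin G \<phi> T (fdelta a) = \<phi> a"
proof -
  have "lin G \<phi> T (fdelta a) = finsum G (\<lambda>j. if a = j then \<phi> j else \<zero>) T"
    unfolding lin_def using assms
    by (intro finsum_cong') (auto simp: fdelta_def add_pow_int_0 add.int_pow_1[OF funcset_mem[OF assms(1) UNIV_I]])
  also have "\<dots> = \<phi> a" using add.finprod_singleton[of a T \<phi>] assms by auto
  finally show ?thesis .
qed

lemma lin_extend:
  assumes "\<phi> \<in> UNIV \<rightarrow> carrier G" "finite T'" "T \<subseteq> T'" "\<And>p. p \<in> T' - T \<Longrightarrow> v p = 0"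
  shows "lin G \<phi> T' v = lin G \<phi> T v"
  unfolding lin_def
  by (rule add.finprod_mono_neutral_cong_right) (use assms in \<open>auto simp: add_pow_int_0\<close>)

end

context abelian_group
begin

lemma ag1: "x \<in> carrier G \<Longrightarrow> y \<in> carrier G \<Longrightarrow> (x \<oplus> y) \<ominus> x \<ominus> y = \<zero>"
  by (metis a_assoc a_comm add.r_inv_ex minus_eq minus_equality r_zero)
lemma ag4: "a \<in> carrier G \<Longrightarrow> d \<in> carrier G \<Longrightarrow> a = (a \<ominus> d) \<oplus> d"
  by (metis a_comm a_lcomm a_closed minus_closed minus_eq add.inv_solve_right')
lemma ag5: "a \<in> carrier G \<Longrightarrow> b \<in> carrier G \<Longrightarrow> a \<ominus> b = \<ominus> (b \<ominus> a)"
  by (metis a_inv_closed local.minus_minus minus_eq add.inv_mult_group)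
lemma ag6: "a \<in> carrier G \<Longrightarrow> b \<in> carrier G \<Longrightarrow> a = (a \<oplus> b) \<ominus> b"
  by (metis a_closed minus_eq add.inv_solve_right')
lemma ag7: "a \<in> carrier G \<Longrightarrow> d \<in> carrier G \<Longrightarrow> a \<ominus> (a \<oplus> d) = \<ominus> d"
  by (simp add: a_minus_def minus_add r_neg2)
lemma ag8: "p \<in> carrier G \<Longrightarrow> q \<in> carrier G \<Longrightarrow> s \<in> carrier G \<Longrightarrow> t \<in> carrier G \<Longrightarrow>
  (p \<ominus> q) \<oplus> (s \<ominus> t) = (p \<oplus> s) \<ominus> (q \<oplus> t)"
  by (simp add: a_minus_def minus_add a_ac)
lemma ag9: "a \<in> carrier G \<Longrightarrow> b \<in> carrier G \<Longrightarrow> c \<in> carrier G \<Longrightarrow> a \<ominus> b \<ominus> c = a \<ominus> (b \<oplus> c)"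
  by (simp add: a_minus_def minus_add a_ac)
lemma ag3:
  assumes "a \<in> carrier G" "b \<in> carrier G" "c \<in> carrier G"
  shows "a \<ominus> b = (a \<ominus> c) \<ominus> (b \<ominus> c)"
proof -
  have "(a \<ominus> c) \<ominus> (b \<ominus> c) = (a \<ominus> c) \<oplus> (c \<ominus> b)"
    using assms ag5[of b c] by (simp add: a_minus_def[of _ "a \<ominus> c"])
  also have "\<dots> = (a \<oplus> c) \<ominus> (b \<oplus> c)" using assms ag8 by (simp add: a_comm)
  also have "\<dots> = ((a \<oplus> c) \<ominus> c) \<ominus> b" using assms ag9 by (simp add: a_comm)
  also have "\<dots> = a \<ominus> b" using assms ag6[of a c] by simp
  finally show ?thesis by simp
qed

lemma lin_sumlist:
  assumes "\<phi> \<in> UNIV \<rightarrow> carrier G" "finite T" "set xs \<subseteq> T"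
  shows "lin G \<phi> T (\<lambda>p. \<Sum>x\<leftarrow>xs. fdelta x p) = foldr (add G) (map \<phi> xs) \<zero>"
  using assms(3)
proof (induction xs)
  case Nil
  then show ?case using lin_zero by simp
next
  case (Cons y ys)
  have "lin G \<phi> T (\<lambda>p. \<Sum>x\<leftarrow>y # ys. fdelta x p) = lin G \<phi> T (\<lambda>p. fdelta y p + (\<Sum>x\<leftarrow>ys. fdelta x p))"
    by simp
  also have "\<dots> = lin G \<phi> T (fdelta y) \<oplus> lin G \<phi> T (\<lambda>p. \<Sum>x\<leftarrow>ys. fdelta x p)"
    by (rule lin_add[OF assms(1)])
  finally show ?case using Cons lin_delta[OF assms(1,2)] by simp
qed

end

lemma sum_fdelta_notin: "p \<notin> set xs \<Longrightarrow> (\<Sum>x\<leftarrow>xs. fdelta x p) = 0"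
  by (induction xs) (auto simp: fdelta_def)

context ring
begin

lemma rhom_lmul: "r \<in> carrier R \<Longrightarrow> rhom_on R (carrier R) (\<lambda>x. r \<otimes> x)"
  using qrep_remb unfolding qrep_def remb_def by auto

lemma colon_right_ideal: "right_ideal R D \<Longrightarrow> r \<in> carrier R \<Longrightarrow> right_ideal R {x \<in> carrier R. r \<otimes> x \<in> D}"
  using preimage_right_ideal[OF _ right_ideal_carrier rhom_lmul] by auto

lemma r_diff: "r \<in> carrier R \<Longrightarrow> x \<in> carrier R \<Longrightarrow> y \<in> carrier R \<Longrightarrow> r \<otimes> (x \<ominus> y) = r \<otimes> x \<ominus> r \<otimes> y"
  by (simp add: a_minus_def r_distr r_minus)

lemma l_diff: "t \<in> carrier R \<Longrightarrow> x \<in> carrier R \<Longrightarrow> y \<in> carrier R \<Longrightarrow> (x \<ominus> y) \<otimes> t = x \<otimes> t \<ominus> y \<otimes> t"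
  by (simp add: a_minus_def l_distr l_minus)

lemma qemb_minus: "x \<in> carrier R \<Longrightarrow> y \<in> carrier R \<Longrightarrow> qemb R (x \<ominus> y) = a_minus (Qmax R) (qemb R x) (qemb R y)"
  by (simp add: a_minus_def qemb_add qemb_neg)

lemma qsum_negmap:
  assumes "set ys \<subseteq> carrier R \<times> Qmax_carrier R"
  shows "qsum R (map (qterm R) (map (\<lambda>(i, q). (i, a_inv (Qmax R) q)) ys)) = a_inv (Qmax R) (qsum R (map (qterm R) ys))"
proof -
  interpret Q: ring "Qmax R" by (rule Qmax_ring)
  have "map (qterm R) (map (\<lambda>(i, q). (i, a_inv (Qmax R) q)) ys) = map (a_inv (Qmax R)) (map (qterm R) ys)"
    unfolding map_map
  proof (rule map_cong[OF refl])
    fix z assume "z \<in> set ys"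
    obtain i q where z0: "z = (i, q)" by (cases z)
    with \<open>z \<in> set ys\<close> have z: "z = (i, q)" "i \<in> carrier R" "q \<in> Qmax_carrier R"
      using assms by auto
    show "(qterm R \<circ> (\<lambda>(i, q). (i, a_inv (Qmax R) q))) z = (a_inv (Qmax R) \<circ> qterm R) z"
      using Q.r_minus[of "qemb R i" q] z qemb_in[OF z(2)] by (simp add: qterm_def)
  qed
  moreover have "set (map (qterm R) ys) \<subseteq> Qmax_carrier R"
    using assms qterm_closed by auto
  ultimately show ?thesis using qsum_neg[of "map (qterm R) ys"] by (simp only:)
qed

lemma flat_colon:
  assumes S: "qsubR S" and fl: "left_flat_sub R S" and D: "right_ideal R D" "ideal_ext R D S = S"
    and r: "r \<in> carrier R"
  shows "qemb R \<one> \<in> ideal_ext R {x \<in> carrier R. r \<otimes> x \<in> D} S"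
proof -
  interpret Q: ring "Qmax R" by (rule Qmax_ring)
  define K where "K = {x \<in> carrier R. r \<otimes> x \<in> D}"
  define I where "I = {y. \<exists>b\<in>carrier R. \<exists>d\<in>D. y = r \<otimes> b \<oplus> d}"
  define M where "M = ideal_ext R K S"
  note DD = right_idealD[OF D(1)]
  note SS = qsubR_D[OF S]
  have Dminus: "x \<ominus> y \<in> D" if "x \<in> D" "y \<in> D" for x y
    using that DD by (simp add: a_minus_def)
  have Kc: "K \<subseteq> carrier R" unfolding K_def by auto
  have inK: "c \<in> K" if "c \<in> carrier R" "r \<otimes> c \<in> D" for c using that unfolding K_def by auto
  have Ic: "I \<subseteq> carrier R" unfolding I_def using DD(1) r by auto
  have Iri: "right_ideal R I"
  proof (rule right_idealI)
    show "I \<subseteq> carrier R" by (rule Ic)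
    have "\<zero> = r \<otimes> \<zero> \<oplus> \<zero>" using r by simp
    then show "\<zero> \<in> I" unfolding I_def using DD(2) by blast
  next
    fix x y assume "x \<in> I" "y \<in> I"
    then obtain b d b' d' where bd: "b \<in> carrier R" "d \<in> D" "x = r \<otimes> b \<oplus> d"
      "b' \<in> carrier R" "d' \<in> D" "y = r \<otimes> b' \<oplus> d'" unfolding I_def by blast
    have "x \<oplus> y = r \<otimes> (b \<oplus> b') \<oplus> (d \<oplus> d')"
      using bd DD(1) r by (simp add: r_distr a_ac subsetD)
    then show "x \<oplus> y \<in> I" unfolding I_def using bd DD by blast
  next
    fix x assume "x \<in> I"
    then obtain b d where bd: "b \<in> carrier R" "d \<in> D" "x = r \<otimes> b \<oplus> d" unfolding I_def by blast
    have "\<ominus> x = r \<otimes> (\<ominus> b) \<oplus> \<ominus> d"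
      using bd DD(1) r by (simp add: r_minus minus_add subsetD)
    then show "\<ominus> x \<in> I" unfolding I_def using bd DD by blast
  next
    fix x t assume "x \<in> I" "t \<in> carrier R"
    then obtain b d where bd: "b \<in> carrier R" "d \<in> D" "x = r \<otimes> b \<oplus> d" unfolding I_def by blast
    have "x \<otimes> t = r \<otimes> (b \<otimes> t) \<oplus> d \<otimes> t"
      using bd DD(1) r \<open>t \<in> carrier R\<close> by (simp add: l_distr m_assoc subsetD)
    then show "x \<otimes> t \<in> I" unfolding I_def using bd DD \<open>t \<in> carrier R\<close> by blast
  qed
  have DI: "D \<subseteq> I"
  proof
    fix d assume "d \<in> D"
    then have "d = r \<otimes> \<zero> \<oplus> d" using r DD(1) by auto
    then show "d \<in> I" unfolding I_def using \<open>d \<in> D\<close> by blast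
  qed
  have rI: "r \<in> I"
  proof -
    have "r = r \<otimes> \<one> \<oplus> \<zero>" using r by simp
    then show ?thesis unfolding I_def using DD(2) by blast
  qed
  define a where "a i = (SOME b. b \<in> carrier R \<and> (\<exists>d\<in>D. i = r \<otimes> b \<oplus> d))" for i
  have aI: "a i \<in> carrier R \<and> (\<exists>d\<in>D. i = r \<otimes> a i \<oplus> d)" if "i \<in> I" for i
  proof -
    have "\<exists>b. b \<in> carrier R \<and> (\<exists>d\<in>D. i = r \<otimes> b \<oplus> d)" using that unfolding I_def by blast
    then show ?thesis unfolding a_def by (rule someI_ex)
  qed
  have ac: "a i \<in> carrier R" if "i \<in> I" for i using aI[OF that] by blast
  have ra: "r \<otimes> a i \<ominus> i \<in> D" if iI: "i \<in> I" for i
  proof -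
    obtain d where d: "d \<in> D" "i = r \<otimes> a i \<oplus> d" using aI[OF iI] by blast
    have "r \<otimes> a i \<ominus> i = \<ominus> d" using ag7[of "r \<otimes> a i" d] d DD(1) r ac[OF iI] by auto
    then show ?thesis using DD(4) d by simp
  qed
  have K1: "a (i \<oplus> i') \<ominus> (a i \<oplus> a i') \<in> K" if "i \<in> I" "i' \<in> I" for i i'
  proof (rule inK)
    have ii: "i \<oplus> i' \<in> I" using right_idealD(3)[OF Iri] that by blast
    have c: "i \<in> carrier R" "i' \<in> carrier R" using that Ic by auto
    note cc = ac[OF ii] ac[OF that(1)] ac[OF that(2)]
    show "a (i \<oplus> i') \<ominus> (a i \<oplus> a i') \<in> carrier R" using cc by simp
    have e1: "(r \<otimes> a i \<ominus> i) \<oplus> (r \<otimes> a i' \<ominus> i') = (r \<otimes> a i \<oplus> r \<otimes> a i') \<ominus> (i \<oplus> i')"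
      by (rule ag8) (use c cc r in auto)
    have "r \<otimes> (a (i \<oplus> i') \<ominus> (a i \<oplus> a i')) = r \<otimes> a (i \<oplus> i') \<ominus> (r \<otimes> a i \<oplus> r \<otimes> a i')"
      using cc r by (simp add: r_diff r_distr)
    also have "\<dots> = (r \<otimes> a (i \<oplus> i') \<ominus> (i \<oplus> i')) \<ominus> ((r \<otimes> a i \<oplus> r \<otimes> a i') \<ominus> (i \<oplus> i'))"
      by (rule ag3) (use cc c r in auto)
    also have "\<dots> \<in> D" unfolding e1[symmetric]
      using ra[OF ii] ra[OF that(1)] ra[OF that(2)] DD Dminus by simp
    finally show "r \<otimes> (a (i \<oplus> i') \<ominus> (a i \<oplus> a i')) \<in> D" .
  qed
  have K2: "a (i \<otimes> t) \<ominus> a i \<otimes> t \<in> K" if "i \<in> I" "t \<in> carrier R" for i t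
  proof (rule inK)
    have it: "i \<otimes> t \<in> I" using right_idealD(5)[OF Iri] that by blast
    have c: "i \<in> carrier R" using that Ic by auto
    note cc = ac[OF it] ac[OF that(1)]
    show "a (i \<otimes> t) \<ominus> a i \<otimes> t \<in> carrier R" using cc that by simp
    have "r \<otimes> (a (i \<otimes> t) \<ominus> a i \<otimes> t) = r \<otimes> a (i \<otimes> t) \<ominus> (r \<otimes> a i) \<otimes> t"
      using cc r that by (simp add: r_diff m_assoc)
    also have "\<dots> = (r \<otimes> a (i \<otimes> t) \<ominus> i \<otimes> t) \<ominus> ((r \<otimes> a i) \<otimes> t \<ominus> i \<otimes> t)"
      by (rule ag3) (use cc c r that in auto)
    also have "(r \<otimes> a i) \<otimes> t \<ominus> i \<otimes> t = (r \<otimes> a i \<ominus> i) \<otimes> t"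
      using cc c r that by (simp add: l_diff)
    also have "(r \<otimes> a (i \<otimes> t) \<ominus> i \<otimes> t) \<ominus> (r \<otimes> a i \<ominus> i) \<otimes> t \<in> D"
      using ra[OF it] ra[OF that(1)] DD Dminus that by simp
    finally show "r \<otimes> (a (i \<otimes> t) \<ominus> a i \<otimes> t) \<in> D" .
  qed
  have K3: "a d \<in> K" if "d \<in> D" for d
  proof (rule inK)
    have dI: "d \<in> I" using DI that by blast
    show "a d \<in> carrier R" using ac[OF dI] .
    have e: "r \<otimes> a d = (r \<otimes> a d \<ominus> d) \<oplus> d" by (rule ag4) (use ac[OF dI] r DD(1) that in auto)
    show "r \<otimes> a d \<in> D" by (subst e) (rule DD(3)[OF ra[OF dI] that])
  qed
  have K4: "\<one> \<ominus> a r \<in> K"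
  proof (rule inK)
    show "\<one> \<ominus> a r \<in> carrier R" using ac[OF rI] by simp
    have "r \<otimes> (\<one> \<ominus> a r) = \<ominus> (r \<otimes> a r \<ominus> r)"
      using ac[OF rI] r ag5[of r "r \<otimes> a r"] by (simp add: r_diff)
    then show "r \<otimes> (\<one> \<ominus> a r) \<in> D" using ra[OF rI] DD by simp
  qed
  define \<phi> where "\<phi> p = (if fst p \<in> I \<and> snd p \<in> Qmax_carrier R then qmul R (qemb R (a (fst p))) (snd p) else qemb R \<zero>)" for p
  have phic: "\<phi> \<in> UNIV \<rightarrow> carrier (Qmax R)"
    unfolding \<phi>_def using ac by (auto intro!: QM_closed qemb_in)
  have phiv: "\<phi> (i, s) = qmul R (qemb R (a i)) s" if "i \<in> I" "s \<in> S" for i s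
    using that SS(1) unfolding \<phi>_def by auto
  have Msub: "M \<subseteq> Qmax_carrier R" unfolding M_def using IE_sub[OF S Kc] SS(1) by blast
  have M0: "qemb R \<zero> \<in> M" unfolding M_def by (rule IE_zero)
  have Madd: "qadd R x y \<in> M" if "x \<in> M" "y \<in> M" for x y using IE_add[OF S Kc] that unfolding M_def by blast
  have Mneg: "a_inv (Qmax R) x \<in> M" if "x \<in> M" for x using IE_neg[OF S Kc] that unfolding M_def by blast
  have Mminus: "a_minus (Qmax R) x y \<in> M" if "x \<in> M" "y \<in> M" for x y
    using Madd[OF that(1) Mneg[OF that(2)]] by (simp add: a_minus_def)
  have Msingle: "qmul R (qemb R k) s \<in> M" if "k \<in> K" "s \<in> S" for k s
    using IE_single[OF S that(1) Kc that(2)] unfolding M_def .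
  have g1: "a_minus (Qmax R) (a_minus (Qmax R) (\<phi> (i \<oplus> i', s)) (\<phi> (i, s))) (\<phi> (i', s)) \<in> M"
    if "i \<in> I" "i' \<in> I" "s \<in> S" for i i' s
  proof -
    have ii: "i \<oplus> i' \<in> I" using right_idealD(3)[OF Iri] that by blast
    have sc: "s \<in> Qmax_carrier R" using that SS(1) by auto
    note cc = qemb_in[OF ac[OF ii]] qemb_in[OF ac[OF that(1)]] qemb_in[OF ac[OF that(2)]]
    have "qmul R (qemb R (a (i \<oplus> i') \<ominus> (a i \<oplus> a i'))) s
      = qmul R (a_minus (Qmax R) (qemb R (a (i \<oplus> i'))) (qadd R (qemb R (a i)) (qemb R (a i')))) s"
      using ac[OF ii] ac[OF that(1)] ac[OF that(2)] by (simp add: qemb_minus qemb_add)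
    also have "\<dots> = a_minus (Qmax R) (qmul R (qemb R (a (i \<oplus> i'))) s)
        (qadd R (qmul R (qemb R (a i)) s) (qmul R (qemb R (a i')) s))"
      using Q.l_diff[simplified, OF sc cc(1) QA_closed[OF cc(2,3)]] QM_ldistr[OF cc(2,3) sc] by simp
    also have "\<dots> = a_minus (Qmax R) (a_minus (Qmax R) (qmul R (qemb R (a (i \<oplus> i'))) s)
        (qmul R (qemb R (a i)) s)) (qmul R (qemb R (a i')) s)"
      using Q.ag9[simplified, OF QM_closed[OF cc(1) sc] QM_closed[OF cc(2) sc] QM_closed[OF cc(3) sc]] by simp
    finally have "a_minus (Qmax R) (a_minus (Qmax R) (\<phi> (i \<oplus> i', s)) (\<phi> (i, s))) (\<phi> (i', s))
       = qmul R (qemb R (a (i \<oplus> i') \<ominus> (a i \<oplus> a i'))) s"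
      using phiv ii that by simp
    then show ?thesis using Msingle[OF K1[OF that(1,2)] that(3)] by simp
  qed
  have g2: "a_minus (Qmax R) (a_minus (Qmax R) (\<phi> (i, qadd R s s')) (\<phi> (i, s))) (\<phi> (i, s')) \<in> M"
    if "i \<in> I" "s \<in> S" "s' \<in> S" for i s s'
  proof -
    have ss: "qadd R s s' \<in> S" using SS(3) that by blast
    have sc: "s \<in> Qmax_carrier R" "s' \<in> Qmax_carrier R" using that SS(1) by auto
    note cc = qemb_in[OF ac[OF that(1)]]
    have "\<phi> (i, qadd R s s') = qadd R (\<phi> (i, s)) (\<phi> (i, s'))"
      using phiv ss that QM_rdistr[OF sc cc] by simp
    moreover have "a_minus (Qmax R) (a_minus (Qmax R) (qadd R (\<phi> (i, s)) (\<phi> (i, s'))) (\<phi> (i, s))) (\<phi> (i, s')) = qemb R \<zero>"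
      using Q.ag1[simplified, OF QM_closed[OF cc sc(1)] QM_closed[OF cc sc(2)]] phiv that by simp
    ultimately show ?thesis using M0 by simp
  qed
  have g3: "a_minus (Qmax R) (\<phi> (i \<otimes> t, s)) (\<phi> (i, qmul R (qemb R t) s)) \<in> M"
    if "i \<in> I" "t \<in> carrier R" "s \<in> S" for i t s
  proof -
    have it: "i \<otimes> t \<in> I" using right_idealD(5)[OF Iri] that by blast
    have ts: "qmul R (qemb R t) s \<in> S" using SS(2,4) that by blast
    have sc: "s \<in> Qmax_carrier R" using that SS(1) by auto
    note cc = qemb_in[OF ac[OF it]] qemb_in[OF ac[OF that(1)]] qemb_in[OF that(2)]
    have "qmul R (qemb R (a (i \<otimes> t) \<ominus> a i \<otimes> t)) s
      = qmul R (a_minus (Qmax R) (qemb R (a (i \<otimes> t))) (qmul R (qemb R (a i)) (qemb R t))) s"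
      using ac[OF it] ac[OF that(1)] that(2) by (simp add: qemb_minus qemb_mul)
    also have "\<dots> = a_minus (Qmax R) (qmul R (qemb R (a (i \<otimes> t))) s) (qmul R (qemb R (a i)) (qmul R (qemb R t) s))"
      using Q.l_diff[simplified, OF sc cc(1) QM_closed[OF cc(2,3)]] QM_assoc[OF cc(2,3) sc] by simp
    finally have "a_minus (Qmax R) (\<phi> (i \<otimes> t, s)) (\<phi> (i, qmul R (qemb R t) s)) = qmul R (qemb R (a (i \<otimes> t) \<ominus> a i \<otimes> t)) s"
      using phiv it ts that by simp
    then show ?thesis using Msingle[OF K2[OF that(1,2)] that(3)] by simp
  qed
  have three: "finite {p. fdelta A p - fdelta B p - fdelta C p \<noteq> 0} \<and>
      (\<forall>T. finite T \<longrightarrow> {p. fdelta A p - fdelta B p - fdelta C p \<noteq> 0} \<subseteq> T \<longrightarrow>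
        lin (Qmax R) \<phi> T (\<lambda>p. fdelta A p - fdelta B p - fdelta C p) \<in> M)"
    if "a_minus (Qmax R) (a_minus (Qmax R) (\<phi> A) (\<phi> B)) (\<phi> C) \<in> M" for A B C
  proof (intro conjI allI impI)
    have sub: "{p. fdelta A p - fdelta B p - fdelta C p \<noteq> 0} \<subseteq> {A, B, C}" by (auto simp: fdelta_def)
    then show "finite {p. fdelta A p - fdelta B p - fdelta C p \<noteq> 0}" by (rule finite_subset) simp
    fix T assume T: "finite T" "{p. fdelta A p - fdelta B p - fdelta C p \<noteq> 0} \<subseteq> T"
    have "lin (Qmax R) \<phi> T (\<lambda>p. fdelta A p - fdelta B p - fdelta C p)
        = lin (Qmax R) \<phi> (T \<union> {A, B, C}) (\<lambda>p. fdelta A p - fdelta B p - fdelta C p)"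
      by (rule Q.lin_extend[symmetric]) (use T phic in auto)
    also have "\<dots> = a_minus (Qmax R) (a_minus (Qmax R) (\<phi> A) (\<phi> B)) (\<phi> C)"
      using Q.lin_diff[OF phic] Q.lin_delta[OF phic] T by simp
    finally show "lin (Qmax R) \<phi> T (\<lambda>p. fdelta A p - fdelta B p - fdelta C p) \<in> M" using that by simp
  qed
  have two: "finite {p. fdelta A p - fdelta B p \<noteq> 0} \<and>
      (\<forall>T. finite T \<longrightarrow> {p. fdelta A p - fdelta B p \<noteq> 0} \<subseteq> T \<longrightarrow>
        lin (Qmax R) \<phi> T (\<lambda>p. fdelta A p - fdelta B p) \<in> M)"
    if "a_minus (Qmax R) (\<phi> A) (\<phi> B) \<in> M" for A B
  proof (intro conjI allI impI)
    have sub: "{p. fdelta A p - fdelta B p \<noteq> 0} \<subseteq> {A, B}" by (auto simp: fdelta_def)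
    then show "finite {p. fdelta A p - fdelta B p \<noteq> 0}" by (rule finite_subset) simp
    fix T assume T: "finite T" "{p. fdelta A p - fdelta B p \<noteq> 0} \<subseteq> T"
    have "lin (Qmax R) \<phi> T (\<lambda>p. fdelta A p - fdelta B p)
        = lin (Qmax R) \<phi> (T \<union> {A, B}) (\<lambda>p. fdelta A p - fdelta B p)"
      by (rule Q.lin_extend[symmetric]) (use T phic in auto)
    also have "\<dots> = a_minus (Qmax R) (\<phi> A) (\<phi> B)"
      using Q.lin_diff[OF phic] Q.lin_delta[OF phic] T by simp
    finally show "lin (Qmax R) \<phi> T (\<lambda>p. fdelta A p - fdelta B p) \<in> M" using that by simp
  qed
  have inv: "finite {p. u p \<noteq> 0} \<and> (\<forall>T. finite T \<longrightarrow> {p. u p \<noteq> 0} \<subseteq> T \<longrightarrow> lin (Qmax R) \<phi> T u \<in> M)"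
    if "u \<in> tensor_rel R I S" for u
    using that
  proof (induction rule: tensor_rel.induct)
    case zero
    show ?case
    proof (intro conjI allI impI)
      fix T :: "('a \<times> ('a set \<times> ('a \<Rightarrow> 'a)) set) set"
      have "lin (Qmax R) \<phi> T (\<lambda>p. 0) = qemb R \<zero>" using Q.lin_zero[of \<phi> T] by simp
      then show "lin (Qmax R) \<phi> T (\<lambda>p. 0) \<in> M" using M0 by simp
    qed simp
  next
    case (add_l i i' s)
    show ?case by (rule three) (rule g1[OF add_l])
  next
    case (add_r i s s')
    show ?case by (rule three) (rule g2[OF add_r])
  next
    case (balanced i t s)
    show ?case by (rule two) (rule g3[OF balanced])
  next
    case (diff u v)
    have sub: "{p. u p - v p \<noteq> 0} \<subseteq> {p. u p \<noteq> 0} \<union> {p. v p \<noteq> 0}" by auto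
    show ?case
    proof (intro conjI allI impI)
      show "finite {p. u p - v p \<noteq> 0}" using diff.IH by (intro finite_subset[OF sub]) auto
      fix T assume T: "finite T" "{p. u p - v p \<noteq> 0} \<subseteq> T"
      define T' where "T' = T \<union> {p. u p \<noteq> 0} \<union> {p. v p \<noteq> 0}"
      have T': "finite T'" using T diff.IH unfolding T'_def by auto
      have "lin (Qmax R) \<phi> T (\<lambda>p. u p - v p) = lin (Qmax R) \<phi> T' (\<lambda>p. u p - v p)"
        by (rule Q.lin_extend[symmetric]) (use T T' phic in \<open>auto simp: T'_def\<close>)
      also have "\<dots> = a_minus (Qmax R) (lin (Qmax R) \<phi> T' u) (lin (Qmax R) \<phi> T' v)"
        by (rule Q.lin_diff[OF phic])
      moreover have su: "{p. u p \<noteq> 0} \<subseteq> T'" unfolding T'_def by blast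
      moreover have sv: "{p. v p \<noteq> 0} \<subseteq> T'" unfolding T'_def by blast
      moreover have iu: "lin (Qmax R) \<phi> T' u \<in> M"
        using conjunct2[OF diff.IH(1), rule_format, OF T' su] .
      moreover have iv: "lin (Qmax R) \<phi> T' v \<in> M"
        using conjunct2[OF diff.IH(2), rule_format, OF T' sv] .
      ultimately show "lin (Qmax R) \<phi> T (\<lambda>p. u p - v p) \<in> M"
        using Mminus[OF iu iv] by simp
    qed
  qed
  obtain ys where ys: "set ys \<subseteq> D \<times> S" "qemb R r = qsum R (map (qterm R) ys)"
    using SS(2)[OF r] D(2) by (metis ideal_extE)
  define ys' where "ys' = map (\<lambda>(i, q). (i, a_inv (Qmax R) q)) ys"
  define xs where "xs = (r, qemb R \<one>) # ys'"
  have ys'_sub: "set ys' \<subseteq> D \<times> S" using ys(1) SS(5) unfolding ys'_def by auto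
  have xs_sub: "set xs \<subseteq> I \<times> S" using ys'_sub DI rI SS(2) unfolding xs_def by auto
  have ysc: "set ys \<subseteq> carrier R \<times> Qmax_carrier R" using ys(1) DD(1) SS(1) by auto
  have sum0: "qsum R (map (\<lambda>(i, s). qmul R (qemb R i) s) xs) = qemb R \<zero>"
  proof -
    have t1: "qterm R (r, qemb R \<one>) = qemb R r" using QM_rone qemb_in r by (simp add: qterm_def)
    have t2: "qsum R (map (qterm R) ys') = a_inv (Qmax R) (qemb R r)"
      unfolding ys'_def qsum_negmap[OF ysc] ys(2) ..
    have "qsum R (map (\<lambda>(i, s). qmul R (qemb R i) s) xs) = qsum R (map (qterm R) xs)"
      by (simp add: qterm_def)
    also have "\<dots> = qadd R (qterm R (r, qemb R \<one>)) (qsum R (map (qterm R) ys'))"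
      unfolding xs_def by simp
    also have "\<dots> = qadd R (qemb R r) (a_inv (Qmax R) (qemb R r))" unfolding t1 t2 ..
    also have "\<dots> = qemb R \<zero>" using Q.r_neg[of "qemb R r"] qemb_in r by simp
    finally show ?thesis .
  qed
  have u0: "(\<lambda>p. \<Sum>x\<leftarrow>xs. fdelta x p) \<in> tensor_rel R I S"
    using fl Iri xs_sub sum0 unfolding left_flat_sub_def by blast
  have supp: "{p. (\<Sum>x\<leftarrow>xs. fdelta x p) \<noteq> 0} \<subseteq> set xs"
    using sum_fdelta_notin[of _ xs] by auto
  have "lin (Qmax R) \<phi> (set xs) (\<lambda>p. \<Sum>x\<leftarrow>xs. fdelta x p) \<in> M"
    using inv[OF u0] supp by blast
  moreover have "lin (Qmax R) \<phi> (set xs) (\<lambda>p. \<Sum>x\<leftarrow>xs. fdelta x p) = qsum R (map \<phi> xs)"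
    using Q.lin_sumlist[OF phic, of "set xs" xs] unfolding qsum_def by simp
  ultimately have tot: "qsum R (map \<phi> xs) \<in> M" by simp
  have qsM: "qsum R zs \<in> M" if "set zs \<subseteq> M" for zs
    using that by (induction zs) (auto intro: M0 Madd)
  have restM: "qsum R (map \<phi> ys') \<in> M"
  proof (rule qsM, rule subsetI)
    fix y assume "y \<in> set (map \<phi> ys')"
    then obtain d q where dq: "(d, q) \<in> set ys'" "y = \<phi> (d, q)" by auto
    then have "d \<in> D" "q \<in> S" using ys'_sub by auto
    then show "y \<in> M" using dq(2) phiv[of d q] DI Msingle[OF K3] by auto
  qed
  have restc: "qsum R (map \<phi> ys') \<in> carrier (Qmax R)" using restM Msub by auto
  have arc: "qemb R (a r) \<in> carrier (Qmax R)" using qemb_in[OF ac[OF rI]] by simp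
  have "qsum R (map \<phi> xs) = qadd R (\<phi> (r, qemb R \<one>)) (qsum R (map \<phi> ys'))" unfolding xs_def by simp
  moreover have "\<phi> (r, qemb R \<one>) = qemb R (a r)"
    using phiv[OF rI SS(2)[OF one_closed]] QM_rone qemb_in ac[OF rI] by simp
  ultimately have "qadd R (qemb R (a r)) (qsum R (map \<phi> ys')) \<in> M" using tot by simp
  then have "a_minus (Qmax R) (qadd R (qemb R (a r)) (qsum R (map \<phi> ys'))) (qsum R (map \<phi> ys')) \<in> M"
    using Mminus restM by blast
  then have ar: "qemb R (a r) \<in> M" using Q.ag6[OF arc restc, simplified] by simp
  have K4M: "qemb R (\<one> \<ominus> a r) \<in> M"
  proof -
    have "\<one> \<ominus> a r \<in> carrier R" using ac[OF rI] by simp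
    then show ?thesis using Msingle[OF K4 SS(2)[OF one_closed]] QM_rone[OF qemb_in] by simp
  qed
  have "qemb R \<one> = qadd R (qemb R (\<one> \<ominus> a r)) (qemb R (a r))"
    using qemb_add[of "\<one> \<ominus> a r" "a r"] ag4[of \<one> "a r"] ac[OF rI] by simp
  then show ?thesis using Madd[OF K4M ar] unfolding M_def K_def by simp
qed

end

context ring
begin

lemma qsum_lmul:
  "set xs \<subseteq> Qmax_carrier R \<Longrightarrow> s \<in> Qmax_carrier R \<Longrightarrow>
   qmul R s (qsum R xs) = qsum R (map (qmul R s) xs)"
proof (induction xs)
  case Nil
  interpret Q: ring "Qmax R" by (rule Qmax_ring)
  show ?case using Q.r_null[of s] Nil by simp
next
  case (Cons x xs)
  show ?case using Cons QM_rdistr qsum_closed by simp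
qed

lemma IE_sum:
  assumes "qsubR S" "K \<subseteq> carrier R" "set zs \<subseteq> ideal_ext R K S"
  shows "qsum R zs \<in> ideal_ext R K S"
  using assms(3) by (induction zs) (auto intro: IE_zero IE_add[OF assms(1,2)])

lemma IE_lmul:
  assumes S: "qsubR S" and C: "C \<subseteq> carrier R" and K: "K \<subseteq> carrier R" and d: "d \<in> carrier R"
    and dc: "\<And>c. c \<in> C \<Longrightarrow> d \<otimes> c \<in> K" and y: "y \<in> ideal_ext R C S"
  shows "qmul R (qemb R d) y \<in> ideal_ext R K S"
proof -
  obtain zs where zs: "set zs \<subseteq> C \<times> S" "y = qsum R (map (qterm R) zs)" using y by (rule ideal_extE)
  have zc: "set (map (qterm R) zs) \<subseteq> Qmax_carrier R" by (rule qterm_map_closed[OF S C zs(1)])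
  have "qmul R (qemb R d) y = qsum R (map (qmul R (qemb R d)) (map (qterm R) zs))"
    unfolding zs(2) by (rule qsum_lmul[OF zc qemb_in[OF d]])
  also have "\<dots> \<in> ideal_ext R K S"
  proof (rule IE_sum[OF S K], rule subsetI)
    fix w assume "w \<in> set (map (qmul R (qemb R d)) (map (qterm R) zs))"
    then obtain c q where cq: "(c, q) \<in> set zs" "w = qmul R (qemb R d) (qterm R (c, q))" by auto
    then have c: "c \<in> C" "q \<in> S" using zs(1) by auto
    have qc: "q \<in> Qmax_carrier R" using c(2) qsubR_D(1)[OF S] by auto
    have cc: "c \<in> carrier R" using c C by auto
    have "w = qmul R (qemb R (d \<otimes> c)) q"
      using cq(2) QM_assoc[OF qemb_in[OF d] qemb_in[OF cc] qc] qemb_mul[OF d cc] by (simp add: qterm_def)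
    then show "w \<in> ideal_ext R K S" using IE_single[OF S dc[OF c(1)] K c(2)] by simp
  qed
  finally show ?thesis .
qed

lemma good_base: "good {D. dense_right_ideal R D}"
  unfolding good_def using dense_ri dense_carrier
  by (auto intro!: preimage_dense simp: qrep_def)

lemma good_lim:
  assumes "\<And>g. g \<in> A \<Longrightarrow> good (h g)" "A \<noteq> {}"
  shows "good {I. right_ideal R I \<and> (\<forall>g\<in>A. I \<in> h g)}"
proof -
  obtain g0 where g0: "g0 \<in> A" using assms(2) by blast
  have G4: "{x \<in> fst p. snd p x \<in> D} \<in> h g" if "g \<in> A" "\<forall>g\<in>A. D \<in> h g" "qrep R p" "\<forall>g\<in>A. fst p \<in> h g" for g D p
    using goodD(3)[OF assms(1)[OF that(1)]] that by blast
  have "right_ideal R {x \<in> fst p. snd p x \<in> D}" if "\<forall>g\<in>A. D \<in> h g" "qrep R p" "\<forall>g\<in>A. fst p \<in> h g" for D p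
    using goodD(1)[OF assms(1)[OF g0]] G4[OF g0 that] by blast
  then show ?thesis unfolding good_def
    using G4 goodD(2)[OF assms(1)] right_ideal_carrier by auto
qed

lemma succ_good:
  assumes E: "good E" and C: "condition_C R"
  shows "good {I. right_ideal R I \<and> ideal_ext R I (ring_of_quotients R E) = ring_of_quotients R E}"
proof -
  define S where "S = ring_of_quotients R E"
  have S: "qsubR S" unfolding S_def by (rule good_qsubR[OF E])
  have fl: "left_flat_sub R S" using C S unfolding condition_C_def qsubR_def by blast
  note SS = qsubR_D[OF S]
  have carr: "ideal_ext R (carrier R) S = S"
  proof (rule IE_one_imp[OF S subset_refl])
    have "qmul R (qemb R \<one>) (qemb R \<one>) \<in> ideal_ext R (carrier R) S"
      by (rule IE_single[OF S one_closed subset_refl SS(2)[OF one_closed]])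
    then show "qemb R \<one> \<in> ideal_ext R (carrier R) S" using QM_rone[OF qemb_in[OF one_closed]] by simp
  qed
  have G4: "right_ideal R {x \<in> fst p. snd p x \<in> D} \<and> ideal_ext R {x \<in> fst p. snd p x \<in> D} S = S"
    if D: "right_ideal R D" "ideal_ext R D S = S" and p: "qrep R p" "right_ideal R (fst p)" "ideal_ext R (fst p) S = S" for D p
  proof
    note P = qrepD[OF p(1)]
    define K where "K = {x \<in> fst p. snd p x \<in> D}"
    have Kri: "right_ideal R K" unfolding K_def
      using preimage_right_ideal[OF D(1) P(2)] p(1) unfolding qrep_def by blast
    have Kc: "K \<subseteq> carrier R" using right_idealD(1)[OF Kri] .
    show "right_ideal R {x \<in> fst p. snd p x \<in> D}" using Kri unfolding K_def .
    have dK: "qemb R d \<in> ideal_ext R K S" if d: "d \<in> fst p" for d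
    proof -
      have dc: "d \<in> carrier R" using d P(3) by auto
      have g: "snd p d \<in> carrier R" using P(4)[OF d] .
      have one: "qemb R \<one> \<in> ideal_ext R {x \<in> carrier R. snd p d \<otimes> x \<in> D} S"
        by (rule flat_colon[OF S fl D g])
      have "qmul R (qemb R d) (qemb R \<one>) \<in> ideal_ext R K S"
      proof (rule IE_lmul[OF S _ Kc dc _ one])
        show "{x \<in> carrier R. snd p d \<otimes> x \<in> D} \<subseteq> carrier R" by auto
        fix c assume "c \<in> {x \<in> carrier R. snd p d \<otimes> x \<in> D}"
        then have c: "c \<in> carrier R" "snd p d \<otimes> c \<in> D" by auto
        have "d \<otimes> c \<in> fst p" using right_idealD(5)[OF p(2) d c(1)] .
        moreover have "snd p (d \<otimes> c) = snd p d \<otimes> c" using P(6)[OF d c(1)] .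
        ultimately show "d \<otimes> c \<in> K" unfolding K_def using c by simp
      qed
      then show ?thesis using QM_rone[OF qemb_in[OF dc]] by simp
    qed
    have "qemb R \<one> \<in> ideal_ext R (fst p) S" using p(3) SS(2)[OF one_closed] by simp
    then obtain xs where xs: "set xs \<subseteq> fst p \<times> S" "qemb R \<one> = qsum R (map (qterm R) xs)"
      by (rule ideal_extE)
    have "qsum R (map (qterm R) xs) \<in> ideal_ext R K S"
    proof (rule IE_sum[OF S Kc], rule subsetI)
      fix w assume "w \<in> set (map (qterm R) xs)"
      then obtain d q where dq: "(d, q) \<in> set xs" "w = qterm R (d, q)" by auto
      then have "d \<in> fst p" "q \<in> S" using xs(1) by auto
      then show "w \<in> ideal_ext R K S"
        using IE_rmul[OF S Kc dK] dq(2) by (simp add: qterm_def)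
    qed
    then have "qemb R \<one> \<in> ideal_ext R K S" using xs(2) by simp
    then show "ideal_ext R {x \<in> fst p. snd p x \<in> D} S = S"
      using IE_one_imp[OF S Kc] unfolding K_def by blast
  qed
  show ?thesis
    unfolding good_def S_def[symmetric] using carr right_ideal_carrier G4 by auto
qed

end

lemma pred_props:
  fixes \<alpha> :: "'o::wellorder"
  assumes "is_succ \<alpha>"
  shows "(THE \<beta>. \<beta> < \<alpha> \<and> (\<forall>\<gamma>. \<not> (\<beta> < \<gamma> \<and> \<gamma> < \<alpha>))) < \<alpha>"
proof -
  obtain \<beta> where b: "\<beta> < \<alpha>" "\<forall>\<gamma>. \<not> (\<beta> < \<gamma> \<and> \<gamma> < \<alpha>)" using assms unfolding is_succ_def by blast
  have "\<exists>!\<beta>. \<beta> < \<alpha> \<and> (\<forall>\<gamma>. \<not> (\<beta> < \<gamma> \<and> \<gamma> < \<alpha>))"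
  proof (rule ex1I[of _ \<beta>])
    show "\<beta> < \<alpha> \<and> (\<forall>\<gamma>. \<not> (\<beta> < \<gamma> \<and> \<gamma> < \<alpha>))" using b by blast
    fix \<beta>' assume b': "\<beta>' < \<alpha> \<and> (\<forall>\<gamma>. \<not> (\<beta>' < \<gamma> \<and> \<gamma> < \<alpha>))"
    show "\<beta>' = \<beta>"
    proof (rule linorder_cases[of \<beta>' \<beta>])
      assume "\<beta>' < \<beta>" then show ?thesis using b' b by blast
    next
      assume "\<beta> < \<beta>'" then show ?thesis using b' b by blast
    qed
  qed
  from theI'[OF this] show ?thesis by blast
qed

lemma filt_step_adm:
  fixes R :: "('a, 'm) ring_scheme"
  shows "adm_wf {(x, y). x < y} (filt_step R :: ('o::wellorder \<Rightarrow> 'a set set) \<Rightarrow> 'o \<Rightarrow> 'a set set)"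
  unfolding adm_wf_def
proof (intro allI impI)
  fix f g :: "'o::wellorder \<Rightarrow> 'a set set" and x :: 'o
  assume fg: "\<forall>z. (z, x) \<in> {(x, y). x < y} \<longrightarrow> f z = g z"
  show "filt_step R f x = filt_step R g x"
  proof (cases "is_succ x")
    case True
    have "f (THE \<beta>. \<beta> < x \<and> (\<forall>\<gamma>. \<not> (\<beta> < \<gamma> \<and> \<gamma> < x))) = g (THE \<beta>. \<beta> < x \<and> (\<forall>\<gamma>. \<not> (\<beta> < \<gamma> \<and> \<gamma> < x)))"
      using fg pred_props[OF True] by blast
    then show ?thesis unfolding filt_step_def Let_def using True by simp
  next
    case False
    have "(\<forall>\<beta><x. I \<in> f \<beta>) = (\<forall>\<beta><x. I \<in> g \<beta>)" for I using fg by auto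
    then show ?thesis unfolding filt_step_def Let_def using False by simp
  qed
qed

lemma filt_seq_eq: "filt_seq R \<alpha> = filt_step R (filt_seq R) \<alpha>"
  unfolding filt_seq_def by (rule fun_cong[OF wfrec_fixpoint[OF wf filt_step_adm]])

context ring
begin

lemma filt_good:
  fixes \<alpha> :: "'o::wellorder"
  assumes C: "condition_C R"
  shows "good (filt_seq R \<alpha>)"
proof (induction \<alpha> rule: less_induct)
  case (less \<alpha>)
  show ?case
  proof (cases "is_succ \<alpha>")
    case True
    define \<beta> where "\<beta> = (THE \<beta>. \<beta> < \<alpha> \<and> (\<forall>\<gamma>. \<not> (\<beta> < \<gamma> \<and> \<gamma> < \<alpha>)))"
    have b: "\<beta> < \<alpha>" unfolding \<beta>_def by (rule pred_props[OF True])
    have "filt_seq R \<alpha> = {I. right_ideal R I \<and> ideal_ext R I (ring_of_quotients R (filt_seq R \<beta>)) = ring_of_quotients R (filt_seq R \<beta>)}"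
      by (subst filt_seq_eq) (simp add: filt_step_def True \<beta>_def Let_def)
    then show ?thesis using succ_good[OF less.IH[OF b] C] by simp
  next
    case False
    show ?thesis
    proof (cases "\<exists>\<beta>. \<beta> < \<alpha>")
      case True
      have "filt_seq R \<alpha> = {I. right_ideal R I \<and> (\<forall>g\<in>{\<beta>. \<beta> < \<alpha>}. I \<in> filt_seq R g)}"
        by (subst filt_seq_eq) (simp add: filt_step_def False True)
      then show ?thesis using good_lim[of "{\<beta>. \<beta> < \<alpha>}" "filt_seq R"] less.IH True by auto
    next
      case F2: False
      have "filt_seq R \<alpha> = {D. dense_right_ideal R D}"
        by (subst filt_seq_eq) (simp add: filt_step_def False F2)
      then show ?thesis using good_base by simp
    qed
  qed
qed

lemma right_ideal_gen_props:
  assumes "F \<subseteq> carrier R"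
  shows "right_ideal R (right_ideal_gen R F)" "F \<subseteq> right_ideal_gen R F"
    "\<And>I. right_ideal R I \<Longrightarrow> F \<subseteq> I \<Longrightarrow> right_ideal_gen R F \<subseteq> I"
proof -
  define \<F> where "\<F> = {J. right_ideal R J \<and> F \<subseteq> J}"
  have cF: "carrier R \<in> \<F>" unfolding \<F>_def using assms right_ideal_carrier by auto
  have gen: "right_ideal_gen R F = \<Inter>\<F>" unfolding right_ideal_gen_def \<F>_def ..
  have ri: "\<And>J. J \<in> \<F> \<Longrightarrow> right_ideal R J" unfolding \<F>_def by blast
  show "right_ideal R (right_ideal_gen R F)" unfolding gen
  proof (rule right_idealI)
    show "\<Inter>\<F> \<subseteq> carrier R" using cF by blast
    show "\<zero> \<in> \<Inter>\<F>" using right_idealD(2)[OF ri] by blast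
    show "x \<oplus> y \<in> \<Inter>\<F>" if "x \<in> \<Inter>\<F>" "y \<in> \<Inter>\<F>" for x y using that right_idealD(3)[OF ri] by blast
    show "\<ominus> x \<in> \<Inter>\<F>" if "x \<in> \<Inter>\<F>" for x using that right_idealD(4)[OF ri] by blast
    show "x \<otimes> r \<in> \<Inter>\<F>" if "x \<in> \<Inter>\<F>" "r \<in> carrier R" for x r using that right_idealD(5)[OF ri] by blast
  qed
  show "F \<subseteq> right_ideal_gen R F" unfolding gen \<F>_def by blast
  show "right_ideal_gen R F \<subseteq> I" if "right_ideal R I" "F \<subseteq> I" for I
    unfolding gen \<F>_def using that by blast
qed

end

theorem lemma4p1:
  fixes R :: "('a, 'm) ring_scheme" and \<alpha> :: "'o::wellorder"
  assumes "ring R"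
    and "condition_C R"
    and "is_succ \<alpha>"
  shows "\<forall>I \<in> filt_seq R \<alpha>. \<exists>J \<in> filt_seq R \<alpha>. fg_right_ideal R J \<and> J \<subseteq> I"
proof
  interpret ring R by (rule assms(1))
  fix I assume I: "I \<in> filt_seq R \<alpha>"
  define \<beta> where "\<beta> = (THE \<beta>. \<beta> < \<alpha> \<and> (\<forall>\<gamma>. \<not> (\<beta> < \<gamma> \<and> \<gamma> < \<alpha>)))"
  define S where "S = ring_of_quotients R (filt_seq R \<beta>)"
  have S: "qsubR S" unfolding S_def by (rule good_qsubR[OF filt_good[OF assms(2)]])
  have fs: "filt_seq R \<alpha> = {I. right_ideal R I \<and> ideal_ext R I S = S}"
    by (subst filt_seq_eq) (simp add: filt_step_def assms(3) \<beta>_def S_def Let_def)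
  have Iri: "right_ideal R I" and IS: "ideal_ext R I S = S" using I fs by auto
  have Ic: "I \<subseteq> carrier R" using right_idealD(1)[OF Iri] .
  have "qemb R \<one>\<^bsub>R\<^esub> \<in> ideal_ext R I S" using IS qsubR_D(2)[OF S one_closed] by simp
  then obtain xs where xs: "set xs \<subseteq> I \<times> S" "qemb R \<one>\<^bsub>R\<^esub> = qsum R (map (qterm R) xs)"
    by (rule ideal_extE)
  define F where "F = fst ` set xs"
  define J where "J = right_ideal_gen R F"
  have FI: "F \<subseteq> I" unfolding F_def using xs(1) by auto
  have Fc: "F \<subseteq> carrier R" using FI Ic by auto
  note G = right_ideal_gen_props[OF Fc]
  have Jri: "right_ideal R J" unfolding J_def by (rule G(1))
  have JI: "J \<subseteq> I" unfolding J_def by (rule G(3)[OF Iri FI])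
  have Jc: "J \<subseteq> carrier R" using JI Ic by auto
  have "set xs \<subseteq> J \<times> S" using xs(1) G(2) unfolding J_def F_def by force
  then have "qemb R \<one>\<^bsub>R\<^esub> \<in> ideal_ext R J S" using xs(2) ideal_extI by metis
  then have "ideal_ext R J S = S" by (rule IE_one_imp[OF S Jc])
  then have "J \<in> filt_seq R \<alpha>" using fs Jri by simp
  moreover have "fg_right_ideal R J"
    unfolding fg_right_ideal_def using Jri Fc unfolding J_def F_def by auto
  ultimately show "\<exists>J \<in> filt_seq R \<alpha>. fg_right_ideal R J \<and> J \<subseteq> I" using JI by blast
qed

end
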